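(* Let $p$ be a prime and $X$ a countably infinite set. Then the ring $\mathcal{B}_{(1)}(\mathbb{Q}_p(X))$ is an infinite sum ring. In particular, $K_0(\mathcal{B}_{(1)}(\mathbb{Q}_p(X)))=0$.
   Context: $\mathbb{Q}_p(X)$ is the set of maps $\xi:X\to\mathbb{Q}_p$ with $|\xi(i)|_p\le1$ for all but finitely many $i$, a $\mathbb{Z}_p$-module under coordinatewise operations, with the topology $\tau$ in which $A\subseteq\mathbb{Q}_p(X)$ is open iff for every finite $P\subseteq X$ the set $A\cap\big(\prod_{i\in P}\mathbb{Q}_p\times\prod_{j\in X\setminus P}\mathbb{Z}_p\big)$ is open in the product topology. $\mathcal{B}(\mathbb{Q}_p(X))$ is the ring of $\tau$-continuous $\mathbb{Z}_p$-linear maps, normed by $\|T\|=\sup_{\|\xi\|\le1}\|T\xi\|$ with $\|\xi\|=\max_i|\xi(i)|_p$, and $\mathcal{B}_{(1)}(\mathbb{Q}_p(X))$ is the subring of operators of norm at most $1$. A sum ring is a unital ring $R$ with elements $a_0,b_0,a_1,b_1$ such that $a_0b_0=a_1b_1=1$ and $b_0a_0+b_1a_1=1$; then $x\boxplus y:=b_0xa_0+b_1ya_1$ defines a unital ring homomorphism $R\times R\to R$. An infinite sum ring is a sum ring with a unital ring homomorphism $R\to R$, $a\mapsto a^\infty$, such that $a\boxplus a^\infty=a^\infty$ for all $a\in R$. *)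

theory Defs
  imports "HOL-Analysis.Analysis" "HOL-Algebra.Ring" "HOL-Algebra.RingHom"
    "HOL-Computational_Algebra.Factorial_Ring"
begin

definition padic_abs_rat :: "nat \<Rightarrow> rat \<Rightarrow> real" where
  "padic_abs_rat p q =
     (if q = 0 then 0
      else (case quotient_of q of (a, b) \<Rightarrow>
              real p powr (real (multiplicity (int p) b) - real (multiplicity (int p) a))))"

definition padic_cauchy :: "nat \<Rightarrow> (nat \<Rightarrow> rat) \<Rightarrow> bool" where
  "padic_cauchy p f \<longleftrightarrow>
     (\<forall>e>0. \<exists>N. \<forall>m\<ge>N. \<forall>n\<ge>N. padic_abs_rat p (f m - f n) < e)"

definition padic_equiv :: "nat \<Rightarrow> ((nat \<Rightarrow> rat) \<times> (nat \<Rightarrow> rat)) set" where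
  "padic_equiv p = {(f, g). padic_cauchy p f \<and> padic_cauchy p g \<and>
                      (\<lambda>n. padic_abs_rat p (f n - g n)) \<longlonglongrightarrow> 0}"

type_synonym qp = "(nat \<Rightarrow> rat) set"

definition Qp :: "nat \<Rightarrow> qp set" where
  "Qp p = {f. padic_cauchy p f} // padic_equiv p"

definition qp_of :: "nat \<Rightarrow> (nat \<Rightarrow> rat) \<Rightarrow> qp" where
  "qp_of p f = padic_equiv p `` {f}"

definition qp_rep :: "qp \<Rightarrow> (nat \<Rightarrow> rat)" where
  "qp_rep A = (SOME f. f \<in> A)"

definition qp_add :: "nat \<Rightarrow> qp \<Rightarrow> qp \<Rightarrow> qp" where
  "qp_add p A B = qp_of p (\<lambda>n. qp_rep A n + qp_rep B n)"

definition qp_mult :: "nat \<Rightarrow> qp \<Rightarrow> qp \<Rightarrow> qp" where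
  "qp_mult p A B = qp_of p (\<lambda>n. qp_rep A n * qp_rep B n)"

definition qp_neg :: "nat \<Rightarrow> qp \<Rightarrow> qp" where
  "qp_neg p A = qp_of p (\<lambda>n. - qp_rep A n)"

definition qp_zero :: "nat \<Rightarrow> qp" where
  "qp_zero p = qp_of p (\<lambda>n. 0)"

definition qp_abs :: "nat \<Rightarrow> qp \<Rightarrow> real" where
  "qp_abs p A = lim (\<lambda>n. padic_abs_rat p (qp_rep A n))"

definition Zp :: "nat \<Rightarrow> qp set" where
  "Zp p = {A \<in> Qp p. qp_abs p A \<le> 1}"

definition Qp_top :: "nat \<Rightarrow> qp topology" where
  "Qp_top p = topology (\<lambda>U. U \<subseteq> Qp p \<and>
      (\<forall>x\<in>U. \<exists>e>0. \<forall>y\<in>Qp p. qp_abs p (qp_add p y (qp_neg p x)) < e \<longrightarrow> y \<in> U))"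

definition QpX :: "nat \<Rightarrow> ('x \<Rightarrow> qp) set" where
  "QpX p = {\<xi>. (\<forall>i. \<xi> i \<in> Qp p) \<and> finite {i. qp_abs p (\<xi> i) > 1}}"

definition vadd :: "nat \<Rightarrow> ('x \<Rightarrow> qp) \<Rightarrow> ('x \<Rightarrow> qp) \<Rightarrow> ('x \<Rightarrow> qp)" where
  "vadd p \<xi> \<eta> = (\<lambda>i. qp_add p (\<xi> i) (\<eta> i))"

definition vsmult :: "nat \<Rightarrow> qp \<Rightarrow> ('x \<Rightarrow> qp) \<Rightarrow> ('x \<Rightarrow> qp)" where
  "vsmult p a \<xi> = (\<lambda>i. qp_mult p a (\<xi> i))"

definition vzero :: "nat \<Rightarrow> ('x \<Rightarrow> qp)" where
  "vzero p = (\<lambda>i. qp_zero p)"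

definition EP :: "nat \<Rightarrow> 'x set \<Rightarrow> ('x \<Rightarrow> qp) set" where
  "EP p P = {\<xi>. (\<forall>i\<in>P. \<xi> i \<in> Qp p) \<and> (\<forall>j. j \<notin> P \<longrightarrow> \<xi> j \<in> Zp p)}"

definition tau :: "nat \<Rightarrow> ('x \<Rightarrow> qp) topology" where
  "tau p = topology (\<lambda>A. A \<subseteq> QpX p \<and>
      (\<forall>P. finite P \<longrightarrow>
         openin (subtopology (product_topology (\<lambda>i. Qp_top p) UNIV) (EP p P)) (A \<inter> EP p P)))"

definition vnorm :: "nat \<Rightarrow> ('x \<Rightarrow> qp) \<Rightarrow> real" where
  "vnorm p \<xi> = (SUP i. qp_abs p (\<xi> i))"

definition Bop :: "nat \<Rightarrow> (('x \<Rightarrow> qp) \<Rightarrow> ('x \<Rightarrow> qp)) set" where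
  "Bop p = {T. T \<in> extensional (QpX p) \<and> continuous_map (tau p) (tau p) T \<and>
              (\<forall>\<xi>\<in>QpX p. \<forall>\<eta>\<in>QpX p. T (vadd p \<xi> \<eta>) = vadd p (T \<xi>) (T \<eta>)) \<and>
              (\<forall>a\<in>Zp p. \<forall>\<xi>\<in>QpX p. T (vsmult p a \<xi>) = vsmult p a (T \<xi>))}"

definition Bop1 :: "nat \<Rightarrow> (('x \<Rightarrow> qp) \<Rightarrow> ('x \<Rightarrow> qp)) set" where
  "Bop1 p = {T \<in> Bop p. \<forall>\<xi>\<in>QpX p. vnorm p \<xi> \<le> 1 \<longrightarrow> vnorm p (T \<xi>) \<le> 1}"

definition Bop1_ring :: "nat \<Rightarrow> (('x \<Rightarrow> qp) \<Rightarrow> ('x \<Rightarrow> qp)) ring" where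
  "Bop1_ring p =
     \<lparr> carrier = Bop1 p,
       monoid.mult = (\<lambda>S T. restrict (S \<circ> T) (QpX p)),
       one = restrict id (QpX p),
       zero = restrict (\<lambda>\<xi>. vzero p) (QpX p),
       add = (\<lambda>S T. restrict (\<lambda>\<xi>. vadd p (S \<xi>) (T \<xi>)) (QpX p)) \<rparr>"

definition sum_ring_data :: "('a, 'b) ring_scheme \<Rightarrow> 'a \<Rightarrow> 'a \<Rightarrow> 'a \<Rightarrow> 'a \<Rightarrow> bool" where
  "sum_ring_data R a0 b0 a1 b1 \<longleftrightarrow>
     a0 \<in> carrier R \<and> b0 \<in> carrier R \<and> a1 \<in> carrier R \<and> b1 \<in> carrier R \<and>
     a0 \<otimes>\<^bsub>R\<^esub> b0 = \<one>\<^bsub>R\<^esub> \<and> a1 \<otimes>\<^bsub>R\<^esub> b1 = \<one>\<^bsub>R\<^esub> \<and>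
     (b0 \<otimes>\<^bsub>R\<^esub> a0) \<oplus>\<^bsub>R\<^esub> (b1 \<otimes>\<^bsub>R\<^esub> a1) = \<one>\<^bsub>R\<^esub>"

definition sum_ring :: "('a, 'b) ring_scheme \<Rightarrow> bool" where
  "sum_ring R \<longleftrightarrow> ring R \<and> (\<exists>a0 b0 a1 b1. sum_ring_data R a0 b0 a1 b1)"

definition boxplus :: "('a, 'b) ring_scheme \<Rightarrow> 'a \<Rightarrow> 'a \<Rightarrow> 'a \<Rightarrow> 'a \<Rightarrow> 'a \<Rightarrow> 'a \<Rightarrow> 'a" where
  "boxplus R a0 b0 a1 b1 x y =
     (b0 \<otimes>\<^bsub>R\<^esub> x \<otimes>\<^bsub>R\<^esub> a0) \<oplus>\<^bsub>R\<^esub> (b1 \<otimes>\<^bsub>R\<^esub> y \<otimes>\<^bsub>R\<^esub> a1)"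

definition infinite_sum_ring :: "('a, 'b) ring_scheme \<Rightarrow> bool" where
  "infinite_sum_ring R \<longleftrightarrow> ring R \<and>
     (\<exists>a0 b0 a1 b1 \<phi>. sum_ring_data R a0 b0 a1 b1 \<and> \<phi> \<in> ring_hom R R \<and>
        (\<forall>a\<in>carrier R. boxplus R a0 b0 a1 b1 a (\<phi> a) = \<phi> a))"

text \<open>Matrices over \<open>R\<close> are functions \<open>nat \<Rightarrow> nat \<Rightarrow> 'a\<close>; only indices below the size matter.\<close>
definition mat_carrier :: "('a, 'b) ring_scheme \<Rightarrow> nat \<Rightarrow> nat \<Rightarrow> (nat \<Rightarrow> nat \<Rightarrow> 'a) set" where
  "mat_carrier R n m = {A. \<forall>i<n. \<forall>j<m. A i j \<in> carrier R}"

definition mat_eq :: "nat \<Rightarrow> nat \<Rightarrow> (nat \<Rightarrow> nat \<Rightarrow> 'a) \<Rightarrow> (nat \<Rightarrow> nat \<Rightarrow> 'a) \<Rightarrow> bool" where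
  "mat_eq n m A B \<longleftrightarrow> (\<forall>i<n. \<forall>j<m. A i j = B i j)"

definition mat_mult :: "('a, 'b) ring_scheme \<Rightarrow> nat \<Rightarrow> (nat \<Rightarrow> nat \<Rightarrow> 'a) \<Rightarrow> (nat \<Rightarrow> nat \<Rightarrow> 'a) \<Rightarrow> (nat \<Rightarrow> nat \<Rightarrow> 'a)" where
  "mat_mult R k A B = (\<lambda>i j. finsum R (\<lambda>l. A i l \<otimes>\<^bsub>R\<^esub> B l j) {..<k})"

definition idempotent_mat :: "('a, 'b) ring_scheme \<Rightarrow> nat \<Rightarrow> (nat \<Rightarrow> nat \<Rightarrow> 'a) \<Rightarrow> bool" where
  "idempotent_mat R n e \<longleftrightarrow> e \<in> mat_carrier R n n \<and> mat_eq n n (mat_mult R n e e) e"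

text \<open>Murray--von Neumann equivalence of an \<open>n\<times>n\<close> idempotent \<open>e\<close> and an \<open>m\<times>m\<close> idempotent \<open>f\<close>
  (equivalently, \<open>eR\<^sup>n \<cong> fR\<^sup>m\<close> as projective modules).\<close>
definition mvn_equiv :: "('a, 'b) ring_scheme \<Rightarrow> nat \<Rightarrow> nat \<Rightarrow> (nat \<Rightarrow> nat \<Rightarrow> 'a) \<Rightarrow> (nat \<Rightarrow> nat \<Rightarrow> 'a) \<Rightarrow> bool" where
  "mvn_equiv R n m e f \<longleftrightarrow>
     (\<exists>x y. x \<in> mat_carrier R n m \<and> y \<in> mat_carrier R m n \<and>
            mat_eq n n (mat_mult R m x y) e \<and> mat_eq m m (mat_mult R n y x) f)"

definition identity_mat :: "('a, 'b) ring_scheme \<Rightarrow> nat \<Rightarrow> nat \<Rightarrow> 'a" where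
  "identity_mat R = (\<lambda>i j. if i = j then \<one>\<^bsub>R\<^esub> else \<zero>\<^bsub>R\<^esub>)"

definition dsum_one :: "('a, 'b) ring_scheme \<Rightarrow> nat \<Rightarrow> (nat \<Rightarrow> nat \<Rightarrow> 'a) \<Rightarrow> nat \<Rightarrow> nat \<Rightarrow> 'a" where
  "dsum_one R n e = (\<lambda>i j. if i < n \<and> j < n then e i j
                          else if n \<le> i \<and> n \<le> j \<and> i = j then \<one>\<^bsub>R\<^esub> else \<zero>\<^bsub>R\<^esub>)"

text \<open>\<open>K\<^sub>0(R) = 0\<close>: every class \<open>[e]\<close> of an idempotent matrix vanishes, i.e.
  \<open>e \<oplus> 1\<^sub>k\<close> is equivalent to \<open>1\<^sub>k\<close> for some \<open>k\<close> (stable equivalence with \<open>0\<close>).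
  Since \<open>K\<^sub>0(R)\<close> consists of the differences \<open>[e] - [f]\<close>, this is exactly \<open>K\<^sub>0(R) = 0\<close>.\<close>
definition K0_trivial :: "('a, 'b) ring_scheme \<Rightarrow> bool" where
  "K0_trivial R \<longleftrightarrow>
     (\<forall>n e. idempotent_mat R n e \<longrightarrow>
        (\<exists>k. mvn_equiv R (n + k) k (dsum_one R n e) (identity_mat R)))"

end

theory Submission
  imports Defs
begin

definition vq :: "nat \<Rightarrow> rat \<Rightarrow> int" where
  "vq p q = int (multiplicity (int p) (fst (quotient_of q))) - int (multiplicity (int p) (snd (quotient_of q)))"

lemma pabs_vq: "q \<noteq> 0 \<Longrightarrow> padic_abs_rat p q = real p powr (- of_int (vq p q))"
  unfolding padic_abs_rat_def vq_def by (auto split: prod.splits)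

lemma pabs_zero[simp]: "padic_abs_rat p 0 = 0"
  unfolding padic_abs_rat_def by simp

lemma pabs_nonneg: "padic_abs_rat p q \<ge> 0"
  unfolding padic_abs_rat_def by (auto split: prod.splits)

lemma vq_frac:
  assumes p: "prime p" and a: "a \<noteq> 0" and b: "b \<noteq> 0"
  shows "vq p (of_int a / of_int b) = int (multiplicity (int p) a) - int (multiplicity (int p) b)"
proof -
  have pe: "prime_elem (int p)" using p by simp
  obtain a' b' where qo: "quotient_of (of_int a / of_int b) = (a', b')" by (cases "quotient_of (of_int a / of_int b)") auto
  have b'pos: "b' > 0" using quotient_of_denom_pos[OF qo] .
  have eq: "(of_int a / of_int b :: rat) = of_int a' / of_int b'" using quotient_of_div[OF qo] .
  have a'0: "a' \<noteq> 0" using eq a b b'pos by auto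
  have "(of_int (a * b') :: rat) = of_int (a' * b)" using eq a b b'pos
    by (simp add: field_simps)
  hence ab: "a * b' = a' * b" by (simp only: of_int_eq_iff)
  have "multiplicity (int p) (a * b') = multiplicity (int p) (a' * b)" using ab by simp
  hence "multiplicity (int p) a + multiplicity (int p) b' = multiplicity (int p) a' + multiplicity (int p) b"
    using prime_elem_multiplicity_mult_distrib[OF pe] a b a'0 b'pos by (metis less_irrefl)
  thus ?thesis unfolding vq_def qo by simp
qed

lemma rat_frac_exists:
  fixes q :: rat
  obtains a b :: int where "q = of_int a / of_int b" "b \<noteq> 0" "q \<noteq> 0 \<Longrightarrow> a \<noteq> 0"
proof -
  obtain a b where qo: "quotient_of q = (a, b)" by (cases "quotient_of q") auto
  show ?thesis
    apply (rule that[of a b])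
    using quotient_of_div[OF qo] quotient_of_denom_pos[OF qo] by auto
qed

lemma vq_mult:
  assumes p: "prime p" and q: "q \<noteq> 0" and r: "r \<noteq> 0"
  shows "vq p (q * r) = vq p q + vq p r"
proof -
  have pe: "prime_elem (int p)" using p by simp
  obtain a b where qa: "q = of_int a / of_int b" "b \<noteq> 0" "a \<noteq> 0" using rat_frac_exists q by metis
  obtain c d where rc: "r = of_int c / of_int d" "d \<noteq> 0" "c \<noteq> 0" using rat_frac_exists r by metis
  have "q * r = of_int (a * c) / of_int (b * d)" using qa rc by simp
  moreover have "vq p (of_int (a * c) / of_int (b * d)) = int (multiplicity (int p) (a*c)) - int (multiplicity (int p) (b*d))"
    by (rule vq_frac[OF p]) (use qa rc in auto)
  moreover have "vq p q = int (multiplicity (int p) a) - int (multiplicity (int p) b)"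
    using vq_frac[OF p] qa by simp
  moreover have "vq p r = int (multiplicity (int p) c) - int (multiplicity (int p) d)"
    using vq_frac[OF p] rc by simp
  ultimately show ?thesis using prime_elem_multiplicity_mult_distrib[OF pe] qa rc by simp
qed

lemma multiplicity_add_ge:
  assumes p: "prime p" and xy: "(x::int) + y \<noteq> 0"
  shows "multiplicity (int p) (x + y) \<ge> min (multiplicity (int p) x) (multiplicity (int p) y)"
proof -
  let ?k = "min (multiplicity (int p) x) (multiplicity (int p) y)"
  have "int p ^ ?k dvd x" by (rule multiplicity_dvd') simp
  moreover have "int p ^ ?k dvd y" by (rule multiplicity_dvd') simp
  ultimately have "int p ^ ?k dvd x + y" by simp
  moreover have "\<not> is_unit (int p)" using p prime_gt_1_nat by auto
  ultimately show ?thesis using multiplicity_geI xy by blast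
qed

lemma vq_add:
  assumes p: "prime p" and q: "q \<noteq> 0" and r: "r \<noteq> 0" and qr: "q + r \<noteq> 0"
  shows "vq p (q + r) \<ge> min (vq p q) (vq p r)"
proof -
  have pe: "prime_elem (int p)" using p by simp
  obtain a b where qa: "q = of_int a / of_int b" "b \<noteq> 0" "a \<noteq> 0" using rat_frac_exists q by metis
  obtain c d where rc: "r = of_int c / of_int d" "d \<noteq> 0" "c \<noteq> 0" using rat_frac_exists r by metis
  have e: "q + r = of_int (a * d + c * b) / of_int (b * d)" using qa rc by (simp add: field_simps)
  have ne: "a * d + c * b \<noteq> 0" proof
    assume "a * d + c * b = 0"
    hence "(of_int (a * d + c * b) :: rat) = 0" by simp
    thus False using e qr by simp
  qed
  have m: "multiplicity (int p) (a * d + c * b) \<ge> min (multiplicity (int p) (a*d)) (multiplicity (int p) (c*b))"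
    using multiplicity_add_ge[OF p ne] .
  have "vq p (q + r) = int (multiplicity (int p) (a * d + c * b)) - int (multiplicity (int p) (b * d))"
    unfolding e by (rule vq_frac[OF p ne]) (use qa rc in auto)
  moreover have "vq p q = int (multiplicity (int p) a) - int (multiplicity (int p) b)"
    using vq_frac[OF p] qa by simp
  moreover have "vq p r = int (multiplicity (int p) c) - int (multiplicity (int p) d)"
    using vq_frac[OF p] rc by simp
  ultimately show ?thesis using m prime_elem_multiplicity_mult_distrib[OF pe] qa rc by auto
qed

lemma vq_uminus:
  assumes p: "prime p" shows "vq p (- q) = vq p q"
proof (cases "q = 0")
  case True thus ?thesis by simp
next
  case False
  have "- q = q * (-1)" by simp
  moreover have "vq p (-1) = 0" using vq_frac[OF p, of "-1" 1] multiplicity_unit_right[of "-1::int" "int p"] by simp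
  ultimately show ?thesis using vq_mult[OF p False, of "-1"] by simp
qed

lemma pabs_mult: assumes p: "prime p" shows "padic_abs_rat p (q * r) = padic_abs_rat p q * padic_abs_rat p r"
proof (cases "q = 0 \<or> r = 0")
  case True thus ?thesis by auto
next
  case False
  thus ?thesis using vq_mult[OF p, of q r] pabs_vq[of q p] pabs_vq[of r p] pabs_vq[of "q*r" p] p
    by (simp add: powr_add[symmetric])
qed

lemma pabs_uminus: assumes p: "prime p" shows "padic_abs_rat p (- q) = padic_abs_rat p q"
  using vq_uminus[OF p] pabs_vq[of q p] pabs_vq[of "-q" p] by (cases "q = 0") auto

lemma pabs_add: assumes p: "prime p" shows "padic_abs_rat p (q + r) \<le> max (padic_abs_rat p q) (padic_abs_rat p r)"
proof (cases "q = 0 \<or> r = 0 \<or> q + r = 0")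
  case True thus ?thesis using pabs_nonneg[of p q] pabs_nonneg[of p r] by (auto simp: le_max_iff_disj)
next
  case False
  have p1: "real p > 1" using p prime_gt_1_nat by auto
  have "vq p (q + r) \<ge> min (vq p q) (vq p r)" using vq_add[OF p] False by auto
  hence "real p powr (- of_int (vq p (q + r))) \<le> max (real p powr (- of_int (vq p q))) (real p powr (- of_int (vq p r)))"
    using p1 by (auto simp: min_def max_def split: if_splits)
  thus ?thesis using False pabs_vq by auto
qed

lemma pabs_diff_sym: assumes p: "prime p" shows "padic_abs_rat p (q - r) = padic_abs_rat p (r - q)"
  using pabs_uminus[OF p, of "q - r"] by simp

lemma pabs_tri: assumes p: "prime p" shows "padic_abs_rat p (q + r) \<le> padic_abs_rat p q + padic_abs_rat p r"
  using pabs_add[OF p, of q r] pabs_nonneg[of p q] pabs_nonneg[of p r] by linarith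

lemma pabs_rev_tri: assumes p: "prime p" shows "\<bar>padic_abs_rat p q - padic_abs_rat p r\<bar> \<le> padic_abs_rat p (q - r)"
  using pabs_tri[OF p, of "q - r" r] pabs_tri[OF p, of "r - q" q] pabs_diff_sym[OF p, of q r] by auto

definition pnull :: "nat \<Rightarrow> (nat \<Rightarrow> rat) \<Rightarrow> bool" where
  "pnull p f \<longleftrightarrow> (\<lambda>n. padic_abs_rat p (f n)) \<longlonglongrightarrow> 0"

lemma squeeze0: "(\<And>n. 0 \<le> u n) \<Longrightarrow> (\<And>n. u n \<le> v n) \<Longrightarrow> v \<longlonglongrightarrow> (0::real) \<Longrightarrow> u \<longlonglongrightarrow> 0"
  by (rule tendsto_sandwich[of "\<lambda>_. 0" u sequentially v]) auto

context fixes p :: nat assumes p: "prime p"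
begin

lemma pnull_add: "pnull p f \<Longrightarrow> pnull p g \<Longrightarrow> pnull p (\<lambda>n. f n + g n)"
  unfolding pnull_def
  by (rule squeeze0[of _ "\<lambda>n. padic_abs_rat p (f n) + padic_abs_rat p (g n)"])
     (auto simp: pabs_nonneg pabs_tri[OF p] intro: tendsto_add_zero)

lemma pnull_uminus: "pnull p f \<Longrightarrow> pnull p (\<lambda>n. - f n)"
  unfolding pnull_def by (simp add: pabs_uminus[OF p])

lemma pnull_diff: "pnull p f \<Longrightarrow> pnull p g \<Longrightarrow> pnull p (\<lambda>n. f n - g n)"
  using pnull_add[of f "\<lambda>n. - g n"] pnull_uminus[of g] by simp

lemma pnull_zero: "pnull p (\<lambda>n. 0)"
  unfolding pnull_def by simp

lemma pnull_cauchy: assumes "pnull p f" shows "padic_cauchy p f"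
  unfolding padic_cauchy_def
proof (intro allI impI)
  fix e :: real assume e: "e > 0"
  have "\<forall>\<^sub>F n in sequentially. padic_abs_rat p (f n) < e/2"
    using e order_tendstoD(2)[OF assms[unfolded pnull_def], of "e/2"] by simp
  then obtain N where N: "\<And>n. n \<ge> N \<Longrightarrow> padic_abs_rat p (f n) < e/2"
    by (auto simp: eventually_sequentially)
  show "\<exists>N. \<forall>m\<ge>N. \<forall>n\<ge>N. padic_abs_rat p (f m - f n) < e"
  proof (intro exI allI impI)
    fix m n assume "m \<ge> N" "n \<ge> N"
    hence "padic_abs_rat p (f m) < e/2" "padic_abs_rat p (- f n) < e/2" using N pabs_uminus[OF p] by auto
    thus "padic_abs_rat p (f m - f n) < e" using pabs_tri[OF p, of "f m" "- f n"] by simp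
  qed
qed

lemma cauchy_add: assumes f: "padic_cauchy p f" and g: "padic_cauchy p g"
  shows "padic_cauchy p (\<lambda>n. f n + g n)"
  unfolding padic_cauchy_def
proof (intro allI impI)
  fix e :: real assume e: "e > 0"
  obtain N1 where N1: "\<And>m n. m \<ge> N1 \<Longrightarrow> n \<ge> N1 \<Longrightarrow> padic_abs_rat p (f m - f n) < e"
    using f e unfolding padic_cauchy_def by blast
  obtain N2 where N2: "\<And>m n. m \<ge> N2 \<Longrightarrow> n \<ge> N2 \<Longrightarrow> padic_abs_rat p (g m - g n) < e"
    using g e unfolding padic_cauchy_def by blast
  show "\<exists>N. \<forall>m\<ge>N. \<forall>n\<ge>N. padic_abs_rat p (f m + g m - (f n + g n)) < e"
  proof (intro exI[of _ "max N1 N2"] allI impI)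
    fix m n assume "m \<ge> max N1 N2" "n \<ge> max N1 N2"
    hence "padic_abs_rat p (f m - f n) < e" "padic_abs_rat p (g m - g n) < e" using N1 N2 by auto
    hence lt: "padic_abs_rat p ((f m - f n) + (g m - g n)) < e"
      using pabs_add[OF p, of "f m - f n" "g m - g n"] by (meson le_less_trans max_less_iff_conj)
    have eq: "f m + g m - (f n + g n) = (f m - f n) + (g m - g n)" by simp
    show "padic_abs_rat p (f m + g m - (f n + g n)) < e" using lt by (simp only: eq)
  qed
qed

lemma cauchy_uminus: "padic_cauchy p f \<Longrightarrow> padic_cauchy p (\<lambda>n. - f n)"
proof -
  assume f: "padic_cauchy p f"
  have "\<And>m n. padic_abs_rat p (- f m - - f n) = padic_abs_rat p (f m - f n)"
  proof -
    fix m n have "- f m - - f n = - (f m - f n)" by simp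
    thus "padic_abs_rat p (- f m - - f n) = padic_abs_rat p (f m - f n)" using pabs_uminus[OF p, of "f m - f n"] by simp
  qed
  thus ?thesis using f unfolding padic_cauchy_def by simp
qed

lemma cauchy_bounded: assumes f: "padic_cauchy p f"
  shows "\<exists>B>0. \<forall>n. padic_abs_rat p (f n) \<le> B"
proof -
  obtain N where N: "\<And>m n. m \<ge> N \<Longrightarrow> n \<ge> N \<Longrightarrow> padic_abs_rat p (f m - f n) < 1"
    using f unfolding padic_cauchy_def by (meson zero_less_one)
  define B where "B = Max ((\<lambda>n. padic_abs_rat p (f n)) ` {..N}) + 1"
  have fin: "\<And>n. n \<le> N \<Longrightarrow> padic_abs_rat p (f n) \<le> Max ((\<lambda>n. padic_abs_rat p (f n)) ` {..N})"
    by (rule Max_ge) auto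
  have Bpos: "B > 0" using fin[of N] pabs_nonneg[of p "f N"] unfolding B_def by linarith
  have "\<forall>n. padic_abs_rat p (f n) \<le> B"
  proof
    fix n show "padic_abs_rat p (f n) \<le> B"
    proof (cases "n \<le> N")
      case True thus ?thesis using fin[OF True] unfolding B_def by linarith
    next
      case False
      have "padic_abs_rat p (f n) \<le> padic_abs_rat p (f n - f N) + padic_abs_rat p (f N)"
        using pabs_tri[OF p, of "f n - f N" "f N"] by simp
      also have "\<dots> \<le> 1 + Max ((\<lambda>n. padic_abs_rat p (f n)) ` {..N})"
      proof -
        have "padic_abs_rat p (f n - f N) < 1" using N[of n N] False by auto
        thus ?thesis using fin[of N] by linarith
      qed
      finally show ?thesis unfolding B_def by simp
    qed
  qed
  thus ?thesis using Bpos by blast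
qed

lemma pnull_mult_bounded: assumes f: "pnull p f" and B: "\<And>n. padic_abs_rat p (g n) \<le> B"
  shows "pnull p (\<lambda>n. f n * g n)"
  unfolding pnull_def
proof (rule squeeze0[of _ "\<lambda>n. padic_abs_rat p (f n) * B"])
  show "(\<lambda>n. padic_abs_rat p (f n) * B) \<longlonglongrightarrow> 0"
    using tendsto_mult_left_zero[OF f[unfolded pnull_def], of B] .
  fix n show "0 \<le> padic_abs_rat p (f n * g n)" by (rule pabs_nonneg)
  have "padic_abs_rat p (f n * g n) = padic_abs_rat p (f n) * padic_abs_rat p (g n)" by (rule pabs_mult[OF p])
  also have "\<dots> \<le> padic_abs_rat p (f n) * B" by (rule mult_left_mono[OF B pabs_nonneg])
  finally show "padic_abs_rat p (f n * g n) \<le> padic_abs_rat p (f n) * B" .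
qed

lemma cauchy_mult: assumes f: "padic_cauchy p f" and g: "padic_cauchy p g"
  shows "padic_cauchy p (\<lambda>n. f n * g n)"
  unfolding padic_cauchy_def
proof (intro allI impI)
  fix e :: real assume e: "e > 0"
  obtain Bf where Bf: "Bf > 0" "\<And>n. padic_abs_rat p (f n) \<le> Bf" using cauchy_bounded[OF f] by blast
  obtain Bg where Bg: "Bg > 0" "\<And>n. padic_abs_rat p (g n) \<le> Bg" using cauchy_bounded[OF g] by blast
  obtain N1 where N1: "\<And>m n. m \<ge> N1 \<Longrightarrow> n \<ge> N1 \<Longrightarrow> padic_abs_rat p (f m - f n) < e / Bg"
    using f e Bg unfolding padic_cauchy_def by (meson divide_pos_pos)
  obtain N2 where N2: "\<And>m n. m \<ge> N2 \<Longrightarrow> n \<ge> N2 \<Longrightarrow> padic_abs_rat p (g m - g n) < e / Bf"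
    using g e Bf unfolding padic_cauchy_def by (meson divide_pos_pos)
  show "\<exists>N. \<forall>m\<ge>N. \<forall>n\<ge>N. padic_abs_rat p (f m * g m - f n * g n) < e"
  proof (intro exI[of _ "max N1 N2"] allI impI)
    fix m n assume "m \<ge> max N1 N2" "n \<ge> max N1 N2"
    hence a: "padic_abs_rat p (f m - f n) < e / Bg" and b: "padic_abs_rat p (g m - g n) < e / Bf" using N1 N2 by auto
    have eq: "f m * g m - f n * g n = f m * (g m - g n) + (f m - f n) * g n" by (simp add: algebra_simps)
    have "padic_abs_rat p (f m * (g m - g n)) < e"
    proof -
      have "padic_abs_rat p (f m * (g m - g n)) = padic_abs_rat p (f m) * padic_abs_rat p (g m - g n)"
        by (rule pabs_mult[OF p])
      also have "\<dots> \<le> Bf * padic_abs_rat p (g m - g n)" using Bf(2)[of m] pabs_nonneg[of p] by (simp add: mult_right_mono)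
      also have "\<dots> < e" using b Bf(1) by (simp add: pos_less_divide_eq mult.commute)
      finally show ?thesis .
    qed
    moreover have "padic_abs_rat p ((f m - f n) * g n) < e"
    proof -
      have "padic_abs_rat p ((f m - f n) * g n) = padic_abs_rat p (f m - f n) * padic_abs_rat p (g n)"
        by (rule pabs_mult[OF p])
      also have "\<dots> \<le> padic_abs_rat p (f m - f n) * Bg" using Bg(2)[of n] pabs_nonneg[of p] by (simp add: mult_left_mono)
      also have "\<dots> < e" using a Bg(1) by (simp add: pos_less_divide_eq)
      finally show ?thesis .
    qed
    ultimately show "padic_abs_rat p (f m * g m - f n * g n) < e"
      unfolding eq using pabs_add[OF p, of "f m * (g m - g n)" "(f m - f n) * g n"] by simp
  qed
qed

lemma equiv_padic: "equiv {f. padic_cauchy p f} (padic_equiv p)"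
proof (rule equivI)
  show "padic_equiv p \<subseteq> {f. padic_cauchy p f} \<times> {f. padic_cauchy p f}"
    unfolding padic_equiv_def by auto
  show "refl_on {f. padic_cauchy p f} (padic_equiv p)"
    unfolding refl_on_def padic_equiv_def by auto
  show "sym (padic_equiv p)"
    unfolding sym_def padic_equiv_def using pnull_uminus[unfolded pnull_def]
    by (auto simp: pabs_diff_sym[OF p])
  show "trans (padic_equiv p)"
  proof (rule transI)
    fix f g h assume "(f, g) \<in> padic_equiv p" "(g, h) \<in> padic_equiv p"
    hence a: "padic_cauchy p f" "padic_cauchy p h" "pnull p (\<lambda>n. f n - g n)" "pnull p (\<lambda>n. g n - h n)"
      unfolding padic_equiv_def pnull_def by auto
    have "pnull p (\<lambda>n. (f n - g n) + (g n - h n))" using pnull_add[OF a(3,4)] .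
    thus "(f, h) \<in> padic_equiv p" using a(1,2) unfolding padic_equiv_def pnull_def by simp
  qed
qed

lemma equiv_iff: "(f, g) \<in> padic_equiv p \<longleftrightarrow> padic_cauchy p f \<and> padic_cauchy p g \<and> pnull p (\<lambda>n. f n - g n)"
  unfolding padic_equiv_def pnull_def by simp

lemma qp_of_in: "padic_cauchy p f \<Longrightarrow> qp_of p f \<in> Qp p"
  unfolding qp_of_def Qp_def by (rule quotientI) simp

lemma qp_of_eq: "padic_cauchy p f \<Longrightarrow> padic_cauchy p g \<Longrightarrow> pnull p (\<lambda>n. f n - g n) \<Longrightarrow> qp_of p f = qp_of p g"
  unfolding qp_of_def using eq_equiv_class_iff[OF equiv_padic] equiv_iff by auto

lemma qp_of_eqD: "padic_cauchy p f \<Longrightarrow> padic_cauchy p g \<Longrightarrow> qp_of p f = qp_of p g \<Longrightarrow> pnull p (\<lambda>n. f n - g n)"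
  unfolding qp_of_def using eq_equiv_class_iff[OF equiv_padic] equiv_iff by auto

lemma qp_rep_mem: assumes "A \<in> Qp p" shows "qp_rep A \<in> A"
proof -
  from assms obtain f where "A = padic_equiv p `` {f}" "padic_cauchy p f" unfolding Qp_def by (auto elim: quotientE)
  hence "f \<in> A" using equiv_class_self[OF equiv_padic] by auto
  thus ?thesis unfolding qp_rep_def by (rule someI[of "\<lambda>f. f \<in> A"])
qed

lemma qp_rep: assumes "A \<in> Qp p" shows "padic_cauchy p (qp_rep A)" "qp_of p (qp_rep A) = A"
proof -
  from assms obtain f where A: "A = padic_equiv p `` {f}" "padic_cauchy p f" unfolding Qp_def by (auto elim: quotientE)
  have "(f, qp_rep A) \<in> padic_equiv p" using qp_rep_mem[OF assms] A by auto
  thus "padic_cauchy p (qp_rep A)" unfolding equiv_iff by simp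
  have e: "padic_equiv p `` {qp_rep A} = padic_equiv p `` {f}"
    using equiv_class_eq[OF equiv_padic \<open>(f, qp_rep A) \<in> padic_equiv p\<close>] by simp
  have "qp_of p (qp_rep A) = padic_equiv p `` {f}" by (simp only: qp_of_def e)
  thus "qp_of p (qp_rep A) = A" using A(1) by simp
qed

lemma qp_cases: assumes "A \<in> Qp p" obtains f where "padic_cauchy p f" "A = qp_of p f"
  using qp_rep[OF assms] that by blast

lemma qp_rep_of: assumes "padic_cauchy p f"
  shows "padic_cauchy p (qp_rep (qp_of p f))" "pnull p (\<lambda>n. qp_rep (qp_of p f) n - f n)"
  using qp_rep[OF qp_of_in[OF assms]] qp_of_eqD assms by auto

lemma qp_add_of: assumes "padic_cauchy p f" "padic_cauchy p g"
  shows "qp_add p (qp_of p f) (qp_of p g) = qp_of p (\<lambda>n. f n + g n)"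
  unfolding qp_add_def
  apply (rule qp_of_eq)
  using qp_rep_of[OF assms(1)] qp_rep_of[OF assms(2)] assms
  by (auto intro!: cauchy_add dest: pnull_add simp: algebra_simps)

lemma qp_neg_of: assumes "padic_cauchy p f"
  shows "qp_neg p (qp_of p f) = qp_of p (\<lambda>n. - f n)"
  unfolding qp_neg_def
  apply (rule qp_of_eq)
  using qp_rep_of[OF assms(1)] assms
  by (auto intro!: cauchy_uminus dest: pnull_uminus simp: algebra_simps)

lemma qp_mult_of: assumes f: "padic_cauchy p f" and g: "padic_cauchy p g"
  shows "qp_mult p (qp_of p f) (qp_of p g) = qp_of p (\<lambda>n. f n * g n)"
  unfolding qp_mult_def
proof (rule qp_of_eq)
  let ?r = "qp_rep (qp_of p f)" and ?s = "qp_rep (qp_of p g)"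
  have r: "padic_cauchy p ?r" "pnull p (\<lambda>n. ?r n - f n)" using qp_rep_of[OF f] by auto
  have s: "padic_cauchy p ?s" "pnull p (\<lambda>n. ?s n - g n)" using qp_rep_of[OF g] by auto
  show "padic_cauchy p (\<lambda>n. ?r n * ?s n)" using r s by (rule_tac cauchy_mult) auto
  show "padic_cauchy p (\<lambda>n. f n * g n)" using f g by (rule cauchy_mult)
  obtain B where B: "\<And>n. padic_abs_rat p (?s n) \<le> B" using cauchy_bounded[OF r(1)] cauchy_bounded[OF s(1)] by blast
  obtain B' where B': "\<And>n. padic_abs_rat p (f n) \<le> B'" using cauchy_bounded[OF f] by blast
  have 1: "pnull p (\<lambda>n. (?r n - f n) * ?s n)" by (rule pnull_mult_bounded[OF r(2) B])
  have 2: "pnull p (\<lambda>n. (?s n - g n) * f n)" by (rule pnull_mult_bounded[OF s(2) B'])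
  have "pnull p (\<lambda>n. (?r n - f n) * ?s n + (?s n - g n) * f n)" using pnull_add[OF 1 2] .
  moreover have "(\<lambda>n. (?r n - f n) * ?s n + (?s n - g n) * f n) = (\<lambda>n. ?r n * ?s n - f n * g n)"
    by (auto simp: algebra_simps)
  ultimately show "pnull p (\<lambda>n. ?r n * ?s n - f n * g n)" by simp
qed

lemma cauchy_const: "padic_cauchy p (\<lambda>n. c)"
  unfolding padic_cauchy_def by auto

lemma cauchy_abs_convergent: assumes f: "padic_cauchy p f"
  shows "convergent (\<lambda>n. padic_abs_rat p (f n))"
proof (rule real_Cauchy_convergent, rule CauchyI)
  fix e :: real assume "e > 0"
  then obtain N where N: "\<And>m n. m \<ge> N \<Longrightarrow> n \<ge> N \<Longrightarrow> padic_abs_rat p (f m - f n) < e"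
    using f unfolding padic_cauchy_def by blast
  show "\<exists>M. \<forall>m\<ge>M. \<forall>n\<ge>M. norm (padic_abs_rat p (f m) - padic_abs_rat p (f n)) < e"
  proof (intro exI allI impI)
    fix m n assume "N \<le> m" "N \<le> n"
    hence "padic_abs_rat p (f m - f n) < e" by (rule N)
    thus "norm (padic_abs_rat p (f m) - padic_abs_rat p (f n)) < e"
      using pabs_rev_tri[OF p, of "f m" "f n"] by simp
  qed
qed

lemma qp_abs_of: assumes f: "padic_cauchy p f"
  shows "(\<lambda>n. padic_abs_rat p (f n)) \<longlonglongrightarrow> qp_abs p (qp_of p f)"
proof -
  let ?r = "qp_rep (qp_of p f)"
  have r: "padic_cauchy p ?r" "pnull p (\<lambda>n. ?r n - f n)" using qp_rep_of[OF f] by auto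
  obtain L where L: "(\<lambda>n. padic_abs_rat p (f n)) \<longlonglongrightarrow> L" using cauchy_abs_convergent[OF f] by (auto simp: convergent_def)
  have d: "(\<lambda>n. padic_abs_rat p (?r n) - padic_abs_rat p (f n)) \<longlonglongrightarrow> 0"
  proof -
    have "(\<lambda>n. \<bar>padic_abs_rat p (?r n) - padic_abs_rat p (f n)\<bar>) \<longlonglongrightarrow> 0"
      using r(2) unfolding pnull_def
      by (rule_tac squeeze0[of _ "\<lambda>n. padic_abs_rat p (?r n - f n)"]) (auto simp: pabs_rev_tri[OF p])
    thus ?thesis by (simp add: tendsto_rabs_zero_iff)
  qed
  have "(\<lambda>n. padic_abs_rat p (?r n)) \<longlonglongrightarrow> L"
    using tendsto_add[OF d L] by simp
  hence "qp_abs p (qp_of p f) = L" unfolding qp_abs_def by (rule limI)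
  thus ?thesis using L by simp
qed

lemma qp_zero_in: "qp_zero p \<in> Qp p"
  unfolding qp_zero_def by (rule qp_of_in) (rule cauchy_const)

lemma qp_add_in: "A \<in> Qp p \<Longrightarrow> B \<in> Qp p \<Longrightarrow> qp_add p A B \<in> Qp p"
  by (elim qp_cases) (simp add: qp_add_of qp_of_in cauchy_add)

lemma qp_neg_in: "A \<in> Qp p \<Longrightarrow> qp_neg p A \<in> Qp p"
  by (elim qp_cases) (simp add: qp_neg_of qp_of_in cauchy_uminus)

lemma qp_mult_in: "A \<in> Qp p \<Longrightarrow> B \<in> Qp p \<Longrightarrow> qp_mult p A B \<in> Qp p"
  by (elim qp_cases) (simp add: qp_mult_of qp_of_in cauchy_mult)

lemma qp_add_assoc: "A \<in> Qp p \<Longrightarrow> B \<in> Qp p \<Longrightarrow> C \<in> Qp p \<Longrightarrow>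
   qp_add p (qp_add p A B) C = qp_add p A (qp_add p B C)"
  by (elim qp_cases) (simp add: qp_add_of cauchy_add add.assoc)

lemma qp_add_comm: "A \<in> Qp p \<Longrightarrow> B \<in> Qp p \<Longrightarrow> qp_add p A B = qp_add p B A"
  by (elim qp_cases) (simp add: qp_add_of add.commute)

lemma qp_add_zero: "A \<in> Qp p \<Longrightarrow> qp_add p A (qp_zero p) = A"
  unfolding qp_zero_def by (elim qp_cases) (simp add: qp_add_of cauchy_const)

lemma qp_zero_add: "A \<in> Qp p \<Longrightarrow> qp_add p (qp_zero p) A = A"
  unfolding qp_zero_def by (elim qp_cases) (simp add: qp_add_of cauchy_const)

lemma qp_neg_add: "A \<in> Qp p \<Longrightarrow> qp_add p (qp_neg p A) A = qp_zero p"
  unfolding qp_zero_def by (elim qp_cases) (simp add: qp_add_of qp_neg_of cauchy_uminus)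

lemma qp_add_neg: "A \<in> Qp p \<Longrightarrow> qp_add p A (qp_neg p A) = qp_zero p"
  unfolding qp_zero_def by (elim qp_cases) (simp add: qp_add_of qp_neg_of cauchy_uminus)

lemma qp_distrib: "A \<in> Qp p \<Longrightarrow> B \<in> Qp p \<Longrightarrow> C \<in> Qp p \<Longrightarrow>
   qp_mult p A (qp_add p B C) = qp_add p (qp_mult p A B) (qp_mult p A C)"
  by (elim qp_cases) (simp add: qp_add_of qp_mult_of cauchy_add cauchy_mult distrib_left)

lemma qp_mult_zero: "A \<in> Qp p \<Longrightarrow> qp_mult p A (qp_zero p) = qp_zero p"
  unfolding qp_zero_def by (elim qp_cases) (simp add: qp_mult_of cauchy_const)

lemma qp_mult_neg: "A \<in> Qp p \<Longrightarrow> B \<in> Qp p \<Longrightarrow> qp_mult p A (qp_neg p B) = qp_neg p (qp_mult p A B)"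
  by (elim qp_cases) (simp add: qp_neg_of qp_mult_of cauchy_uminus cauchy_mult)

lemma qp_abs_nonneg: "A \<in> Qp p \<Longrightarrow> qp_abs p A \<ge> 0"
proof (elim qp_cases)
  fix f assume f: "padic_cauchy p f" "A = qp_of p f"
  show "qp_abs p A \<ge> 0" unfolding f(2) by (rule LIMSEQ_le_const[OF qp_abs_of[OF f(1)]]) (simp add: pabs_nonneg)
qed

lemma qp_abs_zero: "qp_abs p (qp_zero p) = 0"
  unfolding qp_zero_def using qp_abs_of[OF cauchy_const, of 0] by (simp add: LIMSEQ_const_iff)

lemma qp_abs_neg: "A \<in> Qp p \<Longrightarrow> qp_abs p (qp_neg p A) = qp_abs p A"
proof (elim qp_cases)
  fix f assume f: "padic_cauchy p f" "A = qp_of p f"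
  have "(\<lambda>n. padic_abs_rat p (- f n)) \<longlonglongrightarrow> qp_abs p (qp_of p (\<lambda>n. - f n))"
    by (rule qp_abs_of[OF cauchy_uminus[OF f(1)]])
  hence "(\<lambda>n. padic_abs_rat p (f n)) \<longlonglongrightarrow> qp_abs p (qp_of p (\<lambda>n. - f n))"
    by (simp add: pabs_uminus[OF p])
  hence "qp_abs p (qp_of p (\<lambda>n. - f n)) = qp_abs p A" unfolding f(2)
    using qp_abs_of[OF f(1)] LIMSEQ_unique by blast
  thus "qp_abs p (qp_neg p A) = qp_abs p A" using f by (simp add: qp_neg_of)
qed

lemma qp_abs_add: "A \<in> Qp p \<Longrightarrow> B \<in> Qp p \<Longrightarrow> qp_abs p (qp_add p A B) \<le> max (qp_abs p A) (qp_abs p B)"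
proof (elim qp_cases)
  fix f g assume f: "padic_cauchy p f" and g: "padic_cauchy p g" and A: "A = qp_of p f" and B: "B = qp_of p g"
  have "(\<lambda>n. padic_abs_rat p (f n + g n)) \<longlonglongrightarrow> qp_abs p (qp_of p (\<lambda>n. f n + g n))"
    by (rule qp_abs_of[OF cauchy_add[OF f g]])
  moreover have "(\<lambda>n. max (padic_abs_rat p (f n)) (padic_abs_rat p (g n))) \<longlonglongrightarrow> max (qp_abs p A) (qp_abs p B)"
    unfolding A B by (intro tendsto_max qp_abs_of f g)
  ultimately have "qp_abs p (qp_of p (\<lambda>n. f n + g n)) \<le> max (qp_abs p A) (qp_abs p B)"
    by (rule LIMSEQ_le) (auto intro: pabs_add[OF p])
  thus ?thesis unfolding A B qp_add_of[OF f g] .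
qed

end

abbreviation dq :: "nat \<Rightarrow> qp \<Rightarrow> qp \<Rightarrow> real" where
  "dq p y x \<equiv> qp_abs p (qp_add p y (qp_neg p x))"

context fixes p :: nat assumes p: "prime p"
begin

lemma cauchy_diff: "padic_cauchy p f \<Longrightarrow> padic_cauchy p g \<Longrightarrow> padic_cauchy p (\<lambda>n. f n - g n)"
  using cauchy_add[OF p, of f "\<lambda>n. - g n"] cauchy_uminus[OF p, of g] by simp

lemma qp_I1: "x \<in> Qp p \<Longrightarrow> y \<in> Qp p \<Longrightarrow> qp_neg p (qp_add p y (qp_neg p x)) = qp_add p x (qp_neg p y)"
  by (elim qp_cases[OF p]) (simp add: p qp_add_of qp_neg_of cauchy_uminus cauchy_add cauchy_diff)

lemma qp_I2: "x \<in> Qp p \<Longrightarrow> y \<in> Qp p \<Longrightarrow> z \<in> Qp p \<Longrightarrow>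
  qp_add p (qp_add p z (qp_neg p y)) (qp_add p y (qp_neg p x)) = qp_add p z (qp_neg p x)"
  by (elim qp_cases[OF p]) (simp add: p qp_add_of qp_neg_of cauchy_uminus cauchy_add cauchy_diff)

lemma qp_I3: "a \<in> Qp p \<Longrightarrow> b \<in> Qp p \<Longrightarrow> c \<in> Qp p \<Longrightarrow> d \<in> Qp p \<Longrightarrow>
  qp_add p (qp_add p a b) (qp_neg p (qp_add p c d)) = qp_add p (qp_add p a (qp_neg p c)) (qp_add p b (qp_neg p d))"
  by (elim qp_cases[OF p]) (simp add: p qp_add_of qp_neg_of cauchy_uminus cauchy_add cauchy_diff algebra_simps)

lemma qp_I4: "a \<in> Qp p \<Longrightarrow> c \<in> Qp p \<Longrightarrow>
  qp_add p (qp_neg p a) (qp_neg p (qp_neg p c)) = qp_neg p (qp_add p a (qp_neg p c))"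
  by (elim qp_cases[OF p]) (simp add: p qp_add_of qp_neg_of cauchy_uminus cauchy_add cauchy_diff algebra_simps)

lemma qp_I5: "x \<in> Qp p \<Longrightarrow> y \<in> Qp p \<Longrightarrow> qp_add p (qp_add p y (qp_neg p x)) x = y"
  by (elim qp_cases[OF p]) (simp add: p qp_add_of qp_neg_of cauchy_uminus cauchy_add cauchy_diff)

lemma dq_sym: "x \<in> Qp p \<Longrightarrow> y \<in> Qp p \<Longrightarrow> dq p y x = dq p x y"
  by (metis qp_I1 qp_abs_neg[OF p] qp_add_in[OF p] qp_neg_in[OF p])

lemma dq_ultra: "x \<in> Qp p \<Longrightarrow> y \<in> Qp p \<Longrightarrow> z \<in> Qp p \<Longrightarrow> dq p z x \<le> max (dq p z y) (dq p y x)"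
  by (metis qp_I2 qp_abs_add[OF p] qp_add_in[OF p] qp_neg_in[OF p])

lemma dq_refl: "x \<in> Qp p \<Longrightarrow> dq p x x = 0"
  by (simp add: qp_add_neg[OF p] qp_abs_zero[OF p])

lemma abs_le_dq: "x \<in> Qp p \<Longrightarrow> y \<in> Qp p \<Longrightarrow> qp_abs p y \<le> max (dq p y x) (qp_abs p x)"
  by (metis qp_I5 qp_abs_add[OF p] qp_add_in[OF p] qp_neg_in[OF p])

definition Qopen :: "qp set \<Rightarrow> bool" where
  "Qopen U \<longleftrightarrow> U \<subseteq> Qp p \<and> (\<forall>x\<in>U. \<exists>e>0. \<forall>y\<in>Qp p. dq p y x < e \<longrightarrow> y \<in> U)"

lemma istop_Qopen: "istopology Qopen"
  unfolding istopology_def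
proof (intro conjI allI impI)
  fix S T assume S: "Qopen S" and T: "Qopen T"
  show "Qopen (S \<inter> T)" unfolding Qopen_def
  proof (intro conjI ballI)
    show "S \<inter> T \<subseteq> Qp p" using S unfolding Qopen_def by auto
    fix x assume x: "x \<in> S \<inter> T"
    obtain e1 where e1: "e1 > 0" "\<forall>y\<in>Qp p. dq p y x < e1 \<longrightarrow> y \<in> S" using S x unfolding Qopen_def by auto
    obtain e2 where e2: "e2 > 0" "\<forall>y\<in>Qp p. dq p y x < e2 \<longrightarrow> y \<in> T" using T x unfolding Qopen_def by auto
    show "\<exists>e>0. \<forall>y\<in>Qp p. dq p y x < e \<longrightarrow> y \<in> S \<inter> T"
      by (rule exI[of _ "min e1 e2"]) (use e1 e2 in auto)
  qed
next
  fix K assume K: "\<forall>K\<in>K. Qopen K"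
  show "Qopen (\<Union>K)" unfolding Qopen_def
  proof (intro conjI ballI)
    show "\<Union>K \<subseteq> Qp p" using K unfolding Qopen_def by auto
    fix x assume "x \<in> \<Union>K"
    then obtain S where S: "S \<in> K" "x \<in> S" by auto
    then obtain e where e: "e > 0" "\<forall>y\<in>Qp p. dq p y x < e \<longrightarrow> y \<in> S" using K unfolding Qopen_def by blast
    show "\<exists>e>0. \<forall>y\<in>Qp p. dq p y x < e \<longrightarrow> y \<in> \<Union>K"
      using e S by blast
  qed
qed

lemma Qp_top_eq: "Qp_top p = topology Qopen"
  unfolding Qp_top_def Qopen_def ..

lemma openin_Qp_top: "openin (Qp_top p) U \<longleftrightarrow> Qopen U"
  unfolding Qp_top_eq using istop_Qopen by simp

lemma topspace_Qp_top[simp]: "topspace (Qp_top p) = Qp p"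
proof -
  have "Qopen (Qp p)" unfolding Qopen_def by (auto intro: exI[of _ 1])
  hence "Qp p \<subseteq> topspace (Qp_top p)" using openin_Qp_top openin_subset by blast
  moreover have "topspace (Qp_top p) \<subseteq> Qp p"
    unfolding topspace_def using openin_Qp_top Qopen_def by auto
  ultimately show ?thesis by blast
qed

lemma ball_open: assumes c: "c \<in> Qp p" shows "openin (Qp_top p) {y \<in> Qp p. dq p y c < e}"
  unfolding openin_Qp_top Qopen_def
proof (intro conjI ballI)
  fix z assume z: "z \<in> {y \<in> Qp p. dq p y c < e}"
  show "\<exists>e'>0. \<forall>y\<in>Qp p. dq p y z < e' \<longrightarrow> y \<in> {y \<in> Qp p. dq p y c < e}"
  proof (intro exI[of _ e] conjI ballI impI)
    have "0 \<le> dq p z c" using qp_abs_nonneg[OF p] qp_add_in[OF p] qp_neg_in[OF p] z c by auto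
    thus "e > 0" using z by auto
    fix y assume y: "y \<in> Qp p" "dq p y z < e"
    have "dq p y c \<le> max (dq p y z) (dq p z c)" using dq_ultra[of c z y] y z c by auto
    thus "y \<in> {y \<in> Qp p. dq p y c < e}" using y z by auto
  qed
qed auto

lemma Zp_open: "openin (Qp_top p) (Zp p)"
  unfolding openin_Qp_top Qopen_def Zp_def
proof (intro conjI ballI)
  fix x assume x: "x \<in> {A \<in> Qp p. qp_abs p A \<le> 1}"
  show "\<exists>e>0. \<forall>y\<in>Qp p. dq p y x < e \<longrightarrow> y \<in> {A \<in> Qp p. qp_abs p A \<le> 1}"
  proof (intro exI[of _ 1] conjI ballI impI)
    fix y assume y: "y \<in> Qp p" "dq p y x < 1"
    have "qp_abs p y \<le> max (dq p y x) (qp_abs p x)" using abs_le_dq[of x y] x y by auto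
    thus "y \<in> {A \<in> Qp p. qp_abs p A \<le> 1}" using x y by auto
  qed auto
qed auto

lemma Zp_sub: "Zp p \<subseteq> Qp p" unfolding Zp_def by auto

lemma qp_zero_Zp: "qp_zero p \<in> Zp p"
  unfolding Zp_def using qp_zero_in[OF p] qp_abs_zero[OF p] by auto

lemma Zp_add: "a \<in> Zp p \<Longrightarrow> b \<in> Zp p \<Longrightarrow> qp_add p a b \<in> Zp p"
  unfolding Zp_def using qp_add_in[OF p] qp_abs_add[OF p] by fastforce

lemma Zp_neg: "a \<in> Zp p \<Longrightarrow> qp_neg p a \<in> Zp p"
  unfolding Zp_def using qp_neg_in[OF p] qp_abs_neg[OF p] by fastforce

lemma cont_add:
  assumes f: "continuous_map X (Qp_top p) f" and g: "continuous_map X (Qp_top p) g"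
  shows "continuous_map X (Qp_top p) (\<lambda>x. qp_add p (f x) (g x))"
  unfolding continuous_map
proof (intro conjI allI impI)
  have fi: "\<And>x. x \<in> topspace X \<Longrightarrow> f x \<in> Qp p" using f unfolding continuous_map by auto
  have gi: "\<And>x. x \<in> topspace X \<Longrightarrow> g x \<in> Qp p" using g unfolding continuous_map by auto
  show "(\<lambda>x. qp_add p (f x) (g x)) ` topspace X \<subseteq> topspace (Qp_top p)"
    using fi gi qp_add_in[OF p] by auto
  fix U assume U: "openin (Qp_top p) U"
  show "openin X {x \<in> topspace X. qp_add p (f x) (g x) \<in> U}"
  proof (subst openin_subopen, intro ballI)
    fix x0 assume x0: "x0 \<in> {x \<in> topspace X. qp_add p (f x) (g x) \<in> U}"
    obtain e where e: "e > 0" "\<forall>y\<in>Qp p. dq p y (qp_add p (f x0) (g x0)) < e \<longrightarrow> y \<in> U"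
      using U x0 unfolding openin_Qp_top Qopen_def by blast
    let ?T = "{x \<in> topspace X. f x \<in> {y \<in> Qp p. dq p y (f x0) < e}} \<inter> {x \<in> topspace X. g x \<in> {y \<in> Qp p. dq p y (g x0) < e}}"
    have "openin X ?T"
      using openin_continuous_map_preimage[OF f ball_open[OF fi]] openin_continuous_map_preimage[OF g ball_open[OF gi]] x0
      by auto
    moreover have "x0 \<in> ?T" using x0 fi gi dq_refl e by auto
    moreover have "?T \<subseteq> {x \<in> topspace X. qp_add p (f x) (g x) \<in> U}"
    proof
      fix x assume x: "x \<in> ?T"
      have x0X: "x0 \<in> topspace X" using x0 by auto
      have "dq p (qp_add p (f x) (g x)) (qp_add p (f x0) (g x0)) = qp_abs p (qp_add p (qp_add p (f x) (qp_neg p (f x0))) (qp_add p (g x) (qp_neg p (g x0))))"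
        using qp_I3 fi gi x x0X by auto
      also have "\<dots> \<le> max (dq p (f x) (f x0)) (dq p (g x) (g x0))"
        by (rule qp_abs_add[OF p]) (use qp_add_in[OF p] qp_neg_in[OF p] fi gi x x0X in auto)
      also have "\<dots> < e" using x by auto
      finally show "x \<in> {x \<in> topspace X. qp_add p (f x) (g x) \<in> U}"
        using e x fi gi qp_add_in[OF p] by auto
    qed
    ultimately show "\<exists>T. openin X T \<and> x0 \<in> T \<and> T \<subseteq> {x \<in> topspace X. qp_add p (f x) (g x) \<in> U}" by blast
  qed
qed

lemma cont_neg:
  assumes f: "continuous_map X (Qp_top p) f"
  shows "continuous_map X (Qp_top p) (\<lambda>x. qp_neg p (f x))"
  unfolding continuous_map
proof (intro conjI allI impI)
  have fi: "\<And>x. x \<in> topspace X \<Longrightarrow> f x \<in> Qp p" using f unfolding continuous_map by auto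
  show "(\<lambda>x. qp_neg p (f x)) ` topspace X \<subseteq> topspace (Qp_top p)"
    using fi qp_neg_in[OF p] by auto
  fix U assume U: "openin (Qp_top p) U"
  show "openin X {x \<in> topspace X. qp_neg p (f x) \<in> U}"
  proof (subst openin_subopen, intro ballI)
    fix x0 assume x0: "x0 \<in> {x \<in> topspace X. qp_neg p (f x) \<in> U}"
    obtain e where e: "e > 0" "\<forall>y\<in>Qp p. dq p y (qp_neg p (f x0)) < e \<longrightarrow> y \<in> U"
      using U x0 unfolding openin_Qp_top Qopen_def by blast
    let ?T = "{x \<in> topspace X. f x \<in> {y \<in> Qp p. dq p y (f x0) < e}}"
    have "openin X ?T"
      using openin_continuous_map_preimage[OF f ball_open[OF fi]] x0 by auto
    moreover have "x0 \<in> ?T" using x0 fi dq_refl e by auto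
    moreover have "?T \<subseteq> {x \<in> topspace X. qp_neg p (f x) \<in> U}"
    proof
      fix x assume x: "x \<in> ?T"
      have x0X: "x0 \<in> topspace X" using x0 by auto
      have "dq p (qp_neg p (f x)) (qp_neg p (f x0)) = dq p (f x) (f x0)"
        using qp_I4 fi x x0X qp_abs_neg[OF p] qp_add_in[OF p] qp_neg_in[OF p] by auto
      thus "x \<in> {x \<in> topspace X. qp_neg p (f x) \<in> U}"
        using e x fi qp_neg_in[OF p] by auto
    qed
    ultimately show "\<exists>T. openin X T \<and> x0 \<in> T \<and> T \<subseteq> {x \<in> topspace X. qp_neg p (f x) \<in> U}" by blast
  qed
qed

end

abbreviation PT :: "nat \<Rightarrow> ('x \<Rightarrow> qp) topology" where
  "PT p \<equiv> product_topology (\<lambda>i. Qp_top p) UNIV"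

abbreviation ST :: "nat \<Rightarrow> 'x set \<Rightarrow> ('x \<Rightarrow> qp) topology" where
  "ST p P \<equiv> subtopology (PT p) (EP p P)"

context fixes p :: nat assumes p: "prime p"
begin

lemma top_PT: "topspace (PT p) = {f. \<forall>i. f i \<in> Qp p}"
  by (simp add: topspace_Qp_top[OF p] PiE_UNIV_domain Pi_def)

lemma EP_top: "EP p P \<subseteq> topspace (PT p)"
  unfolding top_PT EP_def using Zp_sub[OF p] by blast

lemma EP_QpX: assumes "finite P" shows "EP p P \<subseteq> QpX p"
proof
  fix \<xi> assume x: "\<xi> \<in> EP p P"
  have "\<forall>i. \<xi> i \<in> Qp p" using x Zp_sub[OF p] unfolding EP_def by blast
  moreover have "{i. qp_abs p (\<xi> i) > 1} \<subseteq> P" using x unfolding EP_def Zp_def by force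
  ultimately show "\<xi> \<in> QpX p" unfolding QpX_def using assms finite_subset by blast
qed

lemma QpX_EP: assumes "\<xi> \<in> QpX p" shows "\<xi> \<in> EP p {i. qp_abs p (\<xi> i) > 1}" "finite {i. qp_abs p (\<xi> i) > 1}"
  using assms unfolding QpX_def EP_def Zp_def by auto

lemma EP_Int: "EP p P \<inter> EP p Q = EP p (P \<inter> Q)"
  unfolding EP_def using Zp_sub[OF p] by blast

lemma EP_mono: "P \<subseteq> Q \<Longrightarrow> EP p P \<subseteq> EP p Q"
  unfolding EP_def using Zp_sub[OF p] by blast

lemma W_open: assumes "finite F"
  shows "openin (PT p) {\<xi> \<in> topspace (PT p). \<forall>i\<in>F. \<xi> i \<in> Zp p}"
  using assms
proof (induction F rule: finite_induct)
  case empty thus ?case using openin_topspace[of "PT p"] by simp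
next
  case (insert j F)
  have cm: "continuous_map (PT p) (Qp_top p) (\<lambda>x. x j)" by (rule continuous_map_product_projection) simp
  have "openin (PT p) {\<xi> \<in> topspace (PT p). \<xi> j \<in> Zp p}"
    by (rule openin_continuous_map_preimage[OF cm Zp_open[OF p]])
  hence "openin (PT p) ({\<xi> \<in> topspace (PT p). \<forall>i\<in>F. \<xi> i \<in> Zp p} \<inter> {\<xi> \<in> topspace (PT p). \<xi> j \<in> Zp p})"
    using insert by auto
  moreover have "{\<xi> \<in> topspace (PT p). \<forall>i\<in>insert j F. \<xi> i \<in> Zp p} =
     {\<xi> \<in> topspace (PT p). \<forall>i\<in>F. \<xi> i \<in> Zp p} \<inter> {\<xi> \<in> topspace (PT p). \<xi> j \<in> Zp p}" by auto
  ultimately show ?case by simp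
qed

lemma EP_open_EP: fixes Q P' :: "'x set" assumes "finite P'"
  shows "\<exists>W. openin (PT p) W \<and> EP p Q \<inter> EP p P' = W \<inter> EP p P'"
proof (intro exI conjI)
  show "openin (PT p) {\<xi> \<in> topspace (PT p). \<forall>i\<in>P' - Q. \<xi> i \<in> Zp p}"
    by (rule W_open) (use assms in auto)
  show "EP p Q \<inter> EP p P' = {\<xi> \<in> topspace (PT p). \<forall>i\<in>P' - Q. \<xi> i \<in> Zp p} \<inter> EP p P'"
    using EP_top unfolding EP_def top_PT by blast
qed

definition taupred :: "('x \<Rightarrow> qp) set \<Rightarrow> bool" where
  "taupred A \<longleftrightarrow> A \<subseteq> QpX p \<and> (\<forall>P. finite P \<longrightarrow> openin (ST p P) (A \<inter> EP p P))"

lemma istop_tau: "istopology taupred"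
  unfolding istopology_def
proof (intro conjI allI impI)
  fix S T :: "('x \<Rightarrow> qp) set" assume S: "taupred S" and T: "taupred T"
  show "taupred (S \<inter> T)" unfolding taupred_def
  proof (intro conjI allI impI)
    show "S \<inter> T \<subseteq> QpX p" using S unfolding taupred_def by auto
    fix P :: "'x set" assume "finite P"
    hence "openin (ST p P) ((S \<inter> EP p P) \<inter> (T \<inter> EP p P))" using S T unfolding taupred_def by auto
    moreover have "(S \<inter> EP p P) \<inter> (T \<inter> EP p P) = S \<inter> T \<inter> EP p P" by auto
    ultimately show "openin (ST p P) (S \<inter> T \<inter> EP p P)" by simp
  qed
next
  fix K :: "('x \<Rightarrow> qp) set set" assume K: "\<forall>K\<in>K. taupred K"
  show "taupred (\<Union>K)" unfolding taupred_def
  proof (intro conjI allI impI)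
    show "\<Union>K \<subseteq> QpX p" using K unfolding taupred_def by auto
    fix P :: "'x set" assume "finite P"
    hence "\<And>A. A \<in> K \<Longrightarrow> openin (ST p P) (A \<inter> EP p P)" using K unfolding taupred_def by auto
    hence "openin (ST p P) (\<Union>((\<lambda>A. A \<inter> EP p P) ` K))" by (intro openin_Union) auto
    moreover have "\<Union>((\<lambda>A. A \<inter> EP p P) ` K) = \<Union>K \<inter> EP p P" by auto
    ultimately show "openin (ST p P) (\<Union>K \<inter> EP p P)" by simp
  qed
qed

lemma openin_tau: fixes A :: "('x \<Rightarrow> qp) set" shows "openin (tau p) A \<longleftrightarrow> A \<subseteq> QpX p \<and> (\<forall>P. finite P \<longrightarrow> openin (ST p P) (A \<inter> EP p P))"
proof -
  have e: "tau p = topology taupred" unfolding tau_def taupred_def ..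
  have "openin (tau p :: ('x \<Rightarrow> qp) topology) = taupred" unfolding e by (rule topology_inverse'[OF istop_tau])
  thus ?thesis unfolding taupred_def by simp
qed

lemma topspace_tau[simp]: "topspace (tau p) = QpX p"
proof -
  have "openin (tau p) (QpX p)" unfolding openin_tau
  proof (intro conjI allI impI)
    fix P :: "'x set" assume "finite P"
    hence "QpX p \<inter> EP p P = EP p P" using EP_QpX by auto
    thus "openin (ST p P) (QpX p \<inter> EP p P)" using openin_subtopology_refl EP_top by metis
  qed simp
  hence "QpX p \<subseteq> topspace (tau p)" by (rule openin_subset)
  moreover have "topspace (tau p) \<subseteq> QpX p" unfolding topspace_def using openin_tau by auto
  ultimately show ?thesis by blast
qed

lemma tau_open_of_EP: fixes Q :: "'x set" assumes Q: "finite Q" and B: "openin (ST p Q) B"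
  shows "openin (tau p) B"
  unfolding openin_tau
proof (intro conjI allI impI)
  have BQ: "B \<subseteq> EP p Q" using openin_subset[OF B] by auto
  thus "B \<subseteq> QpX p" using EP_QpX[OF Q] by auto
  obtain V where V: "openin (PT p) V" "B = V \<inter> EP p Q" using B unfolding openin_subtopology by auto
  fix P' :: "'x set" assume P': "finite P'"
  obtain W where W: "openin (PT p) W" "EP p Q \<inter> EP p P' = W \<inter> EP p P'" using EP_open_EP[OF P'] by blast
  have "B \<inter> EP p P' = (V \<inter> W) \<inter> EP p P'" using V(2) W(2) by blast
  thus "openin (ST p P') (B \<inter> EP p P')" unfolding openin_subtopology using V(1) W(1) by blast
qed

lemma tau_open_EP: "finite Q \<Longrightarrow> openin (tau p) (EP p Q)"
  by (rule tau_open_of_EP, assumption, subst openin_subtopology_refl, rule EP_top)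

lemma subtop_top: "U \<subseteq> EP p P \<Longrightarrow> topspace (subtopology (PT p) U) = U"
  using EP_top by auto

lemma bdd_QpX: assumes "\<xi> \<in> QpX p" shows "bdd_above (range (\<lambda>i. qp_abs p (\<xi> i)))"
proof -
  let ?B = "{i. qp_abs p (\<xi> i) > 1}"
  have fin: "finite ?B" using assms unfolding QpX_def by auto
  have "qp_abs p (\<xi> i) \<le> max 1 (Max ((\<lambda>i. qp_abs p (\<xi> i)) ` ?B))" for i
  proof (cases "i \<in> ?B")
    case True thus ?thesis using fin by (meson Max_ge finite_imageI image_eqI le_max_iff_disj)
  qed auto
  thus ?thesis by (rule bdd_aboveI2)
qed

lemma vnorm_le1: assumes "\<xi> \<in> QpX p" shows "vnorm p \<xi> \<le> 1 \<longleftrightarrow> \<xi> \<in> EP p {}"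
proof
  assume a: "vnorm p \<xi> \<le> 1"
  have "\<And>i. qp_abs p (\<xi> i) \<le> 1"
    using cSUP_upper[OF _ bdd_QpX[OF assms]] a unfolding vnorm_def by (meson UNIV_I order_trans)
  thus "\<xi> \<in> EP p {}" using assms unfolding EP_def Zp_def QpX_def by auto
next
  assume "\<xi> \<in> EP p {}"
  hence "\<And>i. qp_abs p (\<xi> i) \<le> 1" unfolding EP_def Zp_def by auto
  thus "vnorm p \<xi> \<le> 1" unfolding vnorm_def by (intro cSUP_least) auto
qed

end

context fixes p :: nat assumes p: "prime p"
begin

lemma cont_tau_H:
  fixes T :: "('x \<Rightarrow> qp) \<Rightarrow> ('x \<Rightarrow> qp)" and P Q :: "'x set"
  assumes T: "continuous_map (tau p) (tau p) T" and P: "finite P" and Q: "finite Q"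
  shows "openin (ST p P) {\<xi> \<in> EP p P. T \<xi> \<in> EP p Q}"
    and "continuous_map (subtopology (PT p) {\<xi> \<in> EP p P. T \<xi> \<in> EP p Q}) (ST p Q) T"
proof -
  have EPX: "EP p P \<subseteq> QpX p" by (rule EP_QpX[OF p P])
  have pre: "openin (ST p P) ({\<xi> \<in> QpX p. T \<xi> \<in> B} \<inter> EP p P)" if B: "openin (tau p) B" for B
  proof -
    have "openin (tau p) {\<xi> \<in> topspace (tau p). T \<xi> \<in> B}" by (rule openin_continuous_map_preimage[OF T B])
    hence "openin (tau p) {\<xi> \<in> QpX p. T \<xi> \<in> B}" by (simp add: p)
    hence "\<forall>P. finite P \<longrightarrow> openin (ST p P) ({\<xi> \<in> QpX p. T \<xi> \<in> B} \<inter> EP p P)" using openin_tau[OF p] by blast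
    thus ?thesis using P by blast
  qed
  have eq: "{\<xi> \<in> QpX p. T \<xi> \<in> EP p Q} \<inter> EP p P = {\<xi> \<in> EP p P. T \<xi> \<in> EP p Q}"
    using EPX by auto
  show U: "openin (ST p P) {\<xi> \<in> EP p P. T \<xi> \<in> EP p Q}"
    using pre[OF tau_open_EP[OF p Q]] unfolding eq .
  define U where "U = {\<xi> \<in> EP p P. T \<xi> \<in> EP p Q}"
  have tU: "topspace (subtopology (PT p) U) = U" by (rule subtop_top[OF p]) (auto simp: U_def)
  have tQ: "topspace (ST p Q) = EP p Q" by (rule subtop_top[OF p]) auto
  show "continuous_map (subtopology (PT p) {\<xi> \<in> EP p P. T \<xi> \<in> EP p Q}) (ST p Q) T"
    unfolding U_def[symmetric] continuous_map
  proof (intro conjI allI impI)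
    show "T ` topspace (subtopology (PT p) U) \<subseteq> topspace (ST p Q)"
      unfolding tU tQ U_def by auto
    fix B assume B: "openin (ST p Q) B"
    have BQ: "B \<subseteq> EP p Q" using openin_subset[OF B] tQ by auto
    obtain V where V: "openin (PT p) V" "{\<xi> \<in> QpX p. T \<xi> \<in> B} \<inter> EP p P = V \<inter> EP p P"
      using pre[OF tau_open_of_EP[OF p Q B]] unfolding openin_subtopology by auto
    have iff: "T x \<in> B \<longleftrightarrow> x \<in> V" if x: "x \<in> EP p P" for x
    proof -
      have "x \<in> {\<xi> \<in> QpX p. T \<xi> \<in> B} \<inter> EP p P \<longleftrightarrow> x \<in> V \<inter> EP p P" using V(2) by simp
      thus ?thesis using x EPX by auto
    qed
    have "{x \<in> topspace (subtopology (PT p) U). T x \<in> B} = V \<inter> U"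
      unfolding tU using iff by (auto simp: U_def)
    thus "openin (subtopology (PT p) U) {x \<in> topspace (subtopology (PT p) U). T x \<in> B}"
      unfolding openin_subtopology using V(1) by blast
  qed
qed

lemma cont_tau_G:
  fixes F :: "('x \<Rightarrow> qp) \<Rightarrow> ('x \<Rightarrow> qp)"
  assumes F: "\<And>\<xi>. \<xi> \<in> QpX p \<Longrightarrow> F \<xi> \<in> QpX p"
    and loc: "\<And>P \<xi>0. finite P \<Longrightarrow> \<xi>0 \<in> EP p P \<Longrightarrow> \<exists>U Q. finite Q \<and> openin (ST p P) U \<and> \<xi>0 \<in> U \<and>
                 F ` U \<subseteq> EP p Q \<and> continuous_map (subtopology (PT p) U) (ST p Q) F"
  shows "continuous_map (tau p) (tau p) F"
  unfolding continuous_map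
proof (intro conjI allI impI)
  show "F ` topspace (tau p) \<subseteq> topspace (tau p)" using F by (auto simp: p)
  fix A :: "('x \<Rightarrow> qp) set" assume A: "openin (tau p) A"
  have AX: "A \<subseteq> QpX p" and AP: "\<And>P. finite P \<Longrightarrow> openin (ST p P) (A \<inter> EP p P)"
    using A unfolding openin_tau[OF p] by auto
  have "openin (tau p) {x \<in> QpX p. F x \<in> A}"
    unfolding openin_tau[OF p]
  proof (intro conjI allI impI)
    show "{x \<in> QpX p. F x \<in> A} \<subseteq> QpX p" by auto
    fix P :: "'x set" assume P: "finite P"
    have EPX: "EP p P \<subseteq> QpX p" by (rule EP_QpX[OF p P])
    show "openin (ST p P) ({x \<in> QpX p. F x \<in> A} \<inter> EP p P)"
    proof (subst openin_subopen, intro ballI)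
      fix \<xi>0 assume x0: "\<xi>0 \<in> {x \<in> QpX p. F x \<in> A} \<inter> EP p P"
      have x0P: "\<xi>0 \<in> EP p P" using x0 by simp
      obtain U Q where UQ: "finite Q" "openin (ST p P) U" "\<xi>0 \<in> U" "F ` U \<subseteq> EP p Q"
          "continuous_map (subtopology (PT p) U) (ST p Q) F"
        using loc[OF P x0P] by blast
      have UP: "U \<subseteq> EP p P" using openin_subset[OF UQ(2)] by auto
      have tU: "topspace (subtopology (PT p) U) = U" by (rule subtop_top[OF p UP])
      have AQ: "openin (ST p Q) (A \<inter> EP p Q)" using AP[OF UQ(1)] .
      define V where "V = {x \<in> U. F x \<in> A \<inter> EP p Q}"
      have "openin (subtopology (PT p) U) V"
        using openin_continuous_map_preimage[OF UQ(5) AQ] unfolding tU V_def .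
      moreover have "subtopology (ST p P) U = subtopology (PT p) U"
        using UP by (simp add: subtopology_subtopology Int_absorb1)
      ultimately have "openin (ST p P) V" using openin_trans_full UQ(2) by metis
      moreover have "\<xi>0 \<in> V" using x0 UQ(3,4) unfolding V_def by auto
      moreover have "V \<subseteq> {x \<in> QpX p. F x \<in> A} \<inter> EP p P"
        using UP EPX unfolding V_def by auto
      ultimately show "\<exists>T. openin (ST p P) T \<and> \<xi>0 \<in> T \<and> T \<subseteq> {x \<in> QpX p. F x \<in> A} \<inter> EP p P"
        by blast
    qed
  qed
  thus "openin (tau p) {x \<in> topspace (tau p). F x \<in> A}" by (simp add: p)
qed

end

context fixes p :: nat assumes p: "prime p"
begin

lemma qp_abs_mult: "A \<in> Qp p \<Longrightarrow> B \<in> Qp p \<Longrightarrow> qp_abs p (qp_mult p A B) = qp_abs p A * qp_abs p B"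
proof (elim qp_cases[OF p])
  fix f g assume f: "padic_cauchy p f" "A = qp_of p f" and g: "padic_cauchy p g" "B = qp_of p g"
  have "(\<lambda>n. padic_abs_rat p (f n * g n)) \<longlonglongrightarrow> qp_abs p (qp_of p (\<lambda>n. f n * g n))"
    by (rule qp_abs_of[OF p cauchy_mult[OF p f(1) g(1)]])
  moreover have "(\<lambda>n. padic_abs_rat p (f n * g n)) \<longlonglongrightarrow> qp_abs p A * qp_abs p B"
    unfolding pabs_mult[OF p] f(2) g(2) by (intro tendsto_mult qp_abs_of[OF p] f g)
  ultimately show ?thesis using LIMSEQ_unique f g by (simp add: qp_mult_of[OF p])
qed

lemma qp_add_swap: "a \<in> Qp p \<Longrightarrow> b \<in> Qp p \<Longrightarrow> c \<in> Qp p \<Longrightarrow> d \<in> Qp p \<Longrightarrow>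
  qp_add p (qp_add p a b) (qp_add p c d) = qp_add p (qp_add p a c) (qp_add p b d)"
  by (elim qp_cases[OF p]) (simp add: p qp_add_of cauchy_add algebra_simps)

lemma QpX_Qp: "\<xi> \<in> QpX p \<Longrightarrow> \<xi> i \<in> Qp p"
  unfolding QpX_def by auto

lemma vzero_in: "vzero p \<in> QpX p"
  unfolding QpX_def vzero_def using qp_zero_in[OF p] qp_abs_zero[OF p] by auto

lemma vzero_EP: "vzero p \<in> EP p P"
  unfolding EP_def vzero_def using qp_zero_in[OF p] qp_zero_Zp[OF p] by auto

lemma vadd_in: assumes x: "\<xi> \<in> QpX p" and y: "\<eta> \<in> QpX p" shows "vadd p \<xi> \<eta> \<in> QpX p"
proof -
  have "{i. qp_abs p (vadd p \<xi> \<eta> i) > 1} \<subseteq> {i. qp_abs p (\<xi> i) > 1} \<union> {i. qp_abs p (\<eta> i) > 1}"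
  proof
    fix i assume "i \<in> {i. qp_abs p (vadd p \<xi> \<eta> i) > 1}"
    moreover have "qp_abs p (vadd p \<xi> \<eta> i) \<le> max (qp_abs p (\<xi> i)) (qp_abs p (\<eta> i))"
      unfolding vadd_def by (rule qp_abs_add[OF p QpX_Qp[OF x] QpX_Qp[OF y]])
    ultimately show "i \<in> {i. qp_abs p (\<xi> i) > 1} \<union> {i. qp_abs p (\<eta> i) > 1}" by auto
  qed
  moreover have "finite ({i. qp_abs p (\<xi> i) > 1} \<union> {i. qp_abs p (\<eta> i) > 1})" using x y unfolding QpX_def by auto
  ultimately have fin: "finite {i. qp_abs p (vadd p \<xi> \<eta> i) > 1}" by (rule finite_subset)
  have "\<forall>i. vadd p \<xi> \<eta> i \<in> Qp p" unfolding vadd_def using qp_add_in[OF p QpX_Qp[OF x] QpX_Qp[OF y]] by blast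
  thus ?thesis using fin unfolding QpX_def by blast
qed

lemma vsmult_in: assumes a: "a \<in> Zp p" and x: "\<xi> \<in> QpX p" shows "vsmult p a \<xi> \<in> QpX p"
proof -
  have aQ: "a \<in> Qp p" and a1: "qp_abs p a \<le> 1" using a unfolding Zp_def by auto
  have "{i. qp_abs p (vsmult p a \<xi> i) > 1} \<subseteq> {i. qp_abs p (\<xi> i) > 1}"
  proof
    fix i assume "i \<in> {i. qp_abs p (vsmult p a \<xi> i) > 1}"
    moreover have "qp_abs p (vsmult p a \<xi> i) \<le> qp_abs p (\<xi> i)"
      unfolding vsmult_def qp_abs_mult[OF aQ QpX_Qp[OF x]]
      by (intro mult_left_le_one_le) (use a1 qp_abs_nonneg[OF p aQ] qp_abs_nonneg[OF p QpX_Qp[OF x]] in auto)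
    ultimately show "i \<in> {i. qp_abs p (\<xi> i) > 1}" by auto
  qed
  moreover have "finite {i. qp_abs p (\<xi> i) > 1}" using x unfolding QpX_def by auto
  ultimately have fin: "finite {i. qp_abs p (vsmult p a \<xi> i) > 1}" by (rule finite_subset)
  have "\<forall>i. vsmult p a \<xi> i \<in> Qp p" unfolding vsmult_def using qp_mult_in[OF p aQ QpX_Qp[OF x]] by blast
  thus ?thesis using fin unfolding QpX_def by blast
qed

lemma vneg_in: assumes x: "\<xi> \<in> QpX p" shows "(\<lambda>i. qp_neg p (\<xi> i)) \<in> QpX p"
  using x unfolding QpX_def by (simp add: qp_abs_neg[OF p] qp_neg_in[OF p])

lemma Bop1_D: fixes T :: "('x \<Rightarrow> qp) \<Rightarrow> ('x \<Rightarrow> qp)" assumes "T \<in> Bop1 p"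
  shows "T \<in> extensional (QpX p)" "continuous_map (tau p) (tau p) T"
    "\<And>\<xi> \<eta>. \<xi> \<in> QpX p \<Longrightarrow> \<eta> \<in> QpX p \<Longrightarrow> T (vadd p \<xi> \<eta>) = vadd p (T \<xi>) (T \<eta>)"
    "\<And>a \<xi>. a \<in> Zp p \<Longrightarrow> \<xi> \<in> QpX p \<Longrightarrow> T (vsmult p a \<xi>) = vsmult p a (T \<xi>)"
    "\<And>\<xi>. \<xi> \<in> QpX p \<Longrightarrow> T \<xi> \<in> QpX p"
    "\<And>\<xi>. \<xi> \<in> QpX p \<Longrightarrow> \<xi> \<in> EP p {} \<Longrightarrow> T \<xi> \<in> EP p {}"
proof -
  have B: "T \<in> Bop p" and N: "\<forall>\<xi>\<in>QpX p. vnorm p \<xi> \<le> 1 \<longrightarrow> vnorm p (T \<xi>) \<le> 1" using assms unfolding Bop1_def by auto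
  show "T \<in> extensional (QpX p)" "continuous_map (tau p) (tau p) T"
    "\<And>\<xi> \<eta>. \<xi> \<in> QpX p \<Longrightarrow> \<eta> \<in> QpX p \<Longrightarrow> T (vadd p \<xi> \<eta>) = vadd p (T \<xi>) (T \<eta>)"
    "\<And>a \<xi>. a \<in> Zp p \<Longrightarrow> \<xi> \<in> QpX p \<Longrightarrow> T (vsmult p a \<xi>) = vsmult p a (T \<xi>)"
    using B unfolding Bop_def by auto
  show TX: "\<And>\<xi>. \<xi> \<in> QpX p \<Longrightarrow> T \<xi> \<in> QpX p"
    using \<open>continuous_map (tau p) (tau p) T\<close> unfolding continuous_map by (auto simp: p)
  show "\<And>\<xi>. \<xi> \<in> QpX p \<Longrightarrow> \<xi> \<in> EP p {} \<Longrightarrow> T \<xi> \<in> EP p {}"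
    using N TX vnorm_le1[OF p] by blast
qed

lemma Bop1_I:
  fixes T :: "('x \<Rightarrow> qp) \<Rightarrow> ('x \<Rightarrow> qp)"
  assumes "T \<in> extensional (QpX p)" "continuous_map (tau p) (tau p) T"
    "\<And>\<xi> \<eta>. \<xi> \<in> QpX p \<Longrightarrow> \<eta> \<in> QpX p \<Longrightarrow> T (vadd p \<xi> \<eta>) = vadd p (T \<xi>) (T \<eta>)"
    "\<And>a \<xi>. a \<in> Zp p \<Longrightarrow> \<xi> \<in> QpX p \<Longrightarrow> T (vsmult p a \<xi>) = vsmult p a (T \<xi>)"
    "\<And>\<xi>. \<xi> \<in> QpX p \<Longrightarrow> \<xi> \<in> EP p {} \<Longrightarrow> T \<xi> \<in> EP p {}"
  shows "T \<in> Bop1 p"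
proof -
  have TX: "\<And>\<xi>. \<xi> \<in> QpX p \<Longrightarrow> T \<xi> \<in> QpX p"
    using assms(2) unfolding continuous_map by (auto simp: p)
  have N: "\<forall>\<xi>\<in>QpX p. vnorm p \<xi> \<le> 1 \<longrightarrow> vnorm p (T \<xi>) \<le> 1"
  proof (intro ballI impI)
    fix \<xi> :: "'x \<Rightarrow> qp" assume x: "\<xi> \<in> QpX p" and n: "vnorm p \<xi> \<le> 1"
    hence "\<xi> \<in> EP p {}" using vnorm_le1[OF p] by blast
    hence "T \<xi> \<in> EP p {}" using assms(5) x by blast
    thus "vnorm p (T \<xi>) \<le> 1" using vnorm_le1[OF p TX[OF x]] by blast
  qed
  show ?thesis unfolding Bop1_def Bop_def using assms(1-4) N by auto
qed

lemma cont_coord: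
  fixes T :: "('x \<Rightarrow> qp) \<Rightarrow> ('x \<Rightarrow> qp)"
  assumes T: "continuous_map (tau p) (tau p) T" and P: "finite P" and Q: "finite Q"
    and U: "U \<subseteq> {\<xi> \<in> EP p P. T \<xi> \<in> EP p Q}"
  shows "continuous_map (subtopology (PT p) U) (Qp_top p) (\<lambda>\<xi>. T \<xi> k)"
proof -
  have "continuous_map (subtopology (PT p) U) (ST p Q) T"
    using continuous_map_from_subtopology_mono[OF cont_tau_H(2)[OF p T P Q] U] .
  hence "continuous_map (subtopology (PT p) U) (PT p) T" by (simp add: continuous_map_in_subtopology)
  hence "continuous_map (subtopology (PT p) U) (Qp_top p) ((\<lambda>x. x k) \<circ> T)"
    by (rule continuous_map_compose) (rule continuous_map_product_projection, simp)
  thus ?thesis by (simp add: comp_def)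
qed

lemma cont_into_EP:
  fixes F :: "('x \<Rightarrow> qp) \<Rightarrow> ('x \<Rightarrow> qp)"
  assumes "\<And>k. continuous_map (subtopology (PT p) U) (Qp_top p) (\<lambda>\<xi>. F \<xi> k)"
    and "F ` U \<subseteq> EP p Q"
  shows "continuous_map (subtopology (PT p) U) (ST p Q) F"
proof (rule continuous_map_into_subtopology)
  show "continuous_map (subtopology (PT p) U) (PT p) F"
    using assms(1) by (simp add: continuous_map_componentwise_UNIV)
  show "F \<in> topspace (subtopology (PT p) U) \<rightarrow> EP p Q" using assms(2) by auto
qed

end

abbreviation bad :: "nat \<Rightarrow> ('x \<Rightarrow> qp) \<Rightarrow> 'x set" where
  "bad p \<eta> \<equiv> {i. qp_abs p (\<eta> i) > 1}"

definition opneg :: "nat \<Rightarrow> (('x \<Rightarrow> qp) \<Rightarrow> ('x \<Rightarrow> qp)) \<Rightarrow> (('x \<Rightarrow> qp) \<Rightarrow> ('x \<Rightarrow> qp))" where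
  "opneg p T = restrict (\<lambda>\<xi> i. qp_neg p (T \<xi> i)) (QpX p)"

lemma R_carrier[simp]: "carrier (Bop1_ring p) = Bop1 p" by (simp add: Bop1_ring_def)
lemma R_add: "S \<oplus>\<^bsub>Bop1_ring p\<^esub> T = restrict (\<lambda>\<xi>. vadd p (S \<xi>) (T \<xi>)) (QpX p)" by (simp add: Bop1_ring_def)
lemma R_mult: "S \<otimes>\<^bsub>Bop1_ring p\<^esub> T = restrict (S \<circ> T) (QpX p)" by (simp add: Bop1_ring_def)
lemma R_one: "\<one>\<^bsub>Bop1_ring p\<^esub> = restrict id (QpX p)" by (simp add: Bop1_ring_def)
lemma R_zero: "\<zero>\<^bsub>Bop1_ring p\<^esub> = restrict (\<lambda>\<xi>. vzero p) (QpX p)" by (simp add: Bop1_ring_def)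

lemma ext_eq: "f \<in> extensional A \<Longrightarrow> g \<in> extensional A \<Longrightarrow> (\<And>x. x \<in> A \<Longrightarrow> f x = g x) \<Longrightarrow> f = g"
  by (rule extensionalityI)

context fixes p :: nat assumes p: "prime p"
begin

lemma zero_Bop1: "restrict (\<lambda>\<xi>. vzero p) (QpX p) \<in> (Bop1 p :: (('x \<Rightarrow> qp) \<Rightarrow> ('x \<Rightarrow> qp)) set)"
proof (rule Bop1_I[OF p])
  show "continuous_map (tau p) (tau p) (restrict (\<lambda>\<xi>. vzero p) (QpX p) :: ('x \<Rightarrow> qp) \<Rightarrow> ('x \<Rightarrow> qp))"
    by (rule continuous_map_eq[of _ _ "\<lambda>\<xi>. vzero p"]) (auto simp: p vzero_in[OF p])
  show "\<And>\<xi> \<eta>. \<xi> \<in> QpX p \<Longrightarrow> \<eta> \<in> QpX p \<Longrightarrow> restrict (\<lambda>\<xi>. vzero p) (QpX p) (vadd p \<xi> \<eta>) =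
    vadd p (restrict (\<lambda>\<xi>. vzero p) (QpX p) \<xi>) (restrict (\<lambda>\<xi>. vzero p) (QpX p) \<eta>)"
    using vadd_in[OF p] by (auto simp: vadd_def vzero_def qp_add_zero[OF p qp_zero_in[OF p]])
  show "\<And>a \<xi>. a \<in> Zp p \<Longrightarrow> \<xi> \<in> QpX p \<Longrightarrow> restrict (\<lambda>\<xi>. vzero p) (QpX p) (vsmult p a \<xi>) =
    vsmult p a (restrict (\<lambda>\<xi>. vzero p) (QpX p) \<xi>)"
    using vsmult_in[OF p] Zp_sub[OF p] by (auto simp: vsmult_def vzero_def qp_mult_zero[OF p])
  show "\<And>\<xi>. \<xi> \<in> QpX p \<Longrightarrow> \<xi> \<in> EP p {} \<Longrightarrow> restrict (\<lambda>\<xi>. vzero p) (QpX p) \<xi> \<in> EP p {}"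
    using vzero_EP[OF p] by auto
qed auto

lemma one_Bop1: "restrict id (QpX p) \<in> (Bop1 p :: (('x \<Rightarrow> qp) \<Rightarrow> ('x \<Rightarrow> qp)) set)"
proof (rule Bop1_I[OF p])
  show "continuous_map (tau p) (tau p) (restrict id (QpX p) :: ('x \<Rightarrow> qp) \<Rightarrow> ('x \<Rightarrow> qp))"
    by (rule continuous_map_eq[OF continuous_map_id]) (auto simp: p)
qed (auto simp: vadd_in[OF p] vsmult_in[OF p])

lemma mult_Bop1:
  fixes S T :: "('x \<Rightarrow> qp) \<Rightarrow> ('x \<Rightarrow> qp)"
  assumes S: "S \<in> Bop1 p" and T: "T \<in> Bop1 p"
  shows "restrict (S \<circ> T) (QpX p) \<in> Bop1 p"
proof (rule Bop1_I[OF p])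
  note s = Bop1_D[OF p S] and t = Bop1_D[OF p T]
  show "continuous_map (tau p) (tau p) (restrict (S \<circ> T) (QpX p))"
    by (rule continuous_map_eq[OF continuous_map_compose[OF t(2) s(2)]]) (auto simp: p)
  show "\<And>\<xi> \<eta>. \<xi> \<in> QpX p \<Longrightarrow> \<eta> \<in> QpX p \<Longrightarrow> restrict (S \<circ> T) (QpX p) (vadd p \<xi> \<eta>) =
    vadd p (restrict (S \<circ> T) (QpX p) \<xi>) (restrict (S \<circ> T) (QpX p) \<eta>)"
    using vadd_in[OF p] s(3,5) t(3,5) by auto
  show "\<And>a \<xi>. a \<in> Zp p \<Longrightarrow> \<xi> \<in> QpX p \<Longrightarrow> restrict (S \<circ> T) (QpX p) (vsmult p a \<xi>) =
    vsmult p a (restrict (S \<circ> T) (QpX p) \<xi>)"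
    using vsmult_in[OF p] s(4,5) t(4,5) by auto
  show "\<And>\<xi>. \<xi> \<in> QpX p \<Longrightarrow> \<xi> \<in> EP p {} \<Longrightarrow> restrict (S \<circ> T) (QpX p) \<xi> \<in> EP p {}"
    using s(5,6) t(5,6) by auto
qed auto

lemma qp_neg_add_distrib: "a \<in> Qp p \<Longrightarrow> b \<in> Qp p \<Longrightarrow> qp_neg p (qp_add p a b) = qp_add p (qp_neg p a) (qp_neg p b)"
  by (elim qp_cases[OF p]) (simp add: p qp_add_of qp_neg_of cauchy_add cauchy_uminus)

lemma add_Bop1:
  fixes S T :: "('x \<Rightarrow> qp) \<Rightarrow> ('x \<Rightarrow> qp)"
  assumes S: "S \<in> Bop1 p" and T: "T \<in> Bop1 p"
  shows "restrict (\<lambda>\<xi>. vadd p (S \<xi>) (T \<xi>)) (QpX p) \<in> Bop1 p"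
proof (rule Bop1_I[OF p])
  note s = Bop1_D[OF p S] and t = Bop1_D[OF p T]
  define F where "F = restrict (\<lambda>\<xi>. vadd p (S \<xi>) (T \<xi>)) (QpX p)"
  show "continuous_map (tau p) (tau p) (restrict (\<lambda>\<xi>. vadd p (S \<xi>) (T \<xi>)) (QpX p))"
    unfolding F_def[symmetric]
  proof (rule cont_tau_G[OF p])
    show "\<And>\<xi>. \<xi> \<in> QpX p \<Longrightarrow> F \<xi> \<in> QpX p" unfolding F_def using vadd_in[OF p] s(5) t(5) by auto
    fix P :: "'x set" and \<xi>0 assume P: "finite P" and x0: "\<xi>0 \<in> EP p P"
    have x0X: "\<xi>0 \<in> QpX p" using EP_QpX[OF p P] x0 by auto
    define Q where "Q = bad p (S \<xi>0) \<union> bad p (T \<xi>0)"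
    have Q: "finite Q" unfolding Q_def using QpX_EP(2)[OF p s(5)[OF x0X]] QpX_EP(2)[OF p t(5)[OF x0X]] by auto
    define U where "U = {\<xi> \<in> EP p P. S \<xi> \<in> EP p Q} \<inter> {\<xi> \<in> EP p P. T \<xi> \<in> EP p Q}"
    have UX: "U \<subseteq> QpX p" using EP_QpX[OF p P] unfolding U_def by auto
    have "openin (ST p P) U" unfolding U_def by (intro openin_Int cont_tau_H(1)[OF p] s(2) t(2) P Q)
    moreover have "\<xi>0 \<in> U"
    proof -
      have "S \<xi>0 \<in> EP p Q" using QpX_EP(1)[OF p s(5)[OF x0X]] EP_mono[OF p, of "bad p (S \<xi>0)" Q] Q_def by auto
      moreover have "T \<xi>0 \<in> EP p Q" using QpX_EP(1)[OF p t(5)[OF x0X]] EP_mono[OF p, of "bad p (T \<xi>0)" Q] Q_def by auto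
      ultimately show ?thesis using x0 unfolding U_def by auto
    qed
    moreover have FU: "F ` U \<subseteq> EP p Q"
    proof
      fix \<eta> assume "\<eta> \<in> F ` U"
      then obtain \<xi> where x: "\<xi> \<in> U" "\<eta> = F \<xi>" by auto
      have "S \<xi> \<in> EP p Q" "T \<xi> \<in> EP p Q" using x(1) unfolding U_def by auto
      thus "\<eta> \<in> EP p Q" using x UX qp_add_in[OF p] Zp_add[OF p] unfolding F_def EP_def vadd_def by auto
    qed
    moreover have "continuous_map (subtopology (PT p) U) (ST p Q) F"
    proof (rule cont_into_EP[OF p _ FU])
      fix k
      have "continuous_map (subtopology (PT p) U) (Qp_top p) (\<lambda>\<xi>. qp_add p (S \<xi> k) (T \<xi> k))"
        by (intro cont_add[OF p] cont_coord[OF p s(2) P Q] cont_coord[OF p t(2) P Q]) (auto simp: U_def)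
      thus "continuous_map (subtopology (PT p) U) (Qp_top p) (\<lambda>\<xi>. F \<xi> k)"
        by (rule continuous_map_eq) (use UX subtop_top[OF p, of U P] in \<open>auto simp: F_def vadd_def U_def\<close>)
    qed
    ultimately show "\<exists>U Q. finite Q \<and> openin (ST p P) U \<and> \<xi>0 \<in> U \<and> F ` U \<subseteq> EP p Q \<and>
        continuous_map (subtopology (PT p) U) (ST p Q) F" using Q by blast
  qed
  show "\<And>\<xi> \<eta>. \<xi> \<in> QpX p \<Longrightarrow> \<eta> \<in> QpX p \<Longrightarrow> restrict (\<lambda>\<xi>. vadd p (S \<xi>) (T \<xi>)) (QpX p) (vadd p \<xi> \<eta>) =
    vadd p (restrict (\<lambda>\<xi>. vadd p (S \<xi>) (T \<xi>)) (QpX p) \<xi>) (restrict (\<lambda>\<xi>. vadd p (S \<xi>) (T \<xi>)) (QpX p) \<eta>)"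
    using vadd_in[OF p] s(3,5) t(3,5) by (auto simp: vadd_def qp_add_swap[OF p] QpX_Qp[OF p])
  show "\<And>a \<xi>. a \<in> Zp p \<Longrightarrow> \<xi> \<in> QpX p \<Longrightarrow> restrict (\<lambda>\<xi>. vadd p (S \<xi>) (T \<xi>)) (QpX p) (vsmult p a \<xi>) =
    vsmult p a (restrict (\<lambda>\<xi>. vadd p (S \<xi>) (T \<xi>)) (QpX p) \<xi>)"
    using vsmult_in[OF p] s(4,5) t(4,5) Zp_sub[OF p]
    by (auto simp: vadd_def vsmult_def qp_distrib[OF p] QpX_Qp[OF p])
  show "\<And>\<xi>. \<xi> \<in> QpX p \<Longrightarrow> \<xi> \<in> EP p {} \<Longrightarrow> restrict (\<lambda>\<xi>. vadd p (S \<xi>) (T \<xi>)) (QpX p) \<xi> \<in> EP p {}"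
    using s(6) t(6) Zp_add[OF p] unfolding EP_def vadd_def by auto
qed auto

lemma neg_Bop1:
  fixes T :: "('x \<Rightarrow> qp) \<Rightarrow> ('x \<Rightarrow> qp)"
  assumes T: "T \<in> Bop1 p"
  shows "opneg p T \<in> Bop1 p"
proof (rule Bop1_I[OF p])
  note t = Bop1_D[OF p T]
  define F where "F = opneg p T"
  show "continuous_map (tau p) (tau p) (opneg p T)"
    unfolding F_def[symmetric]
  proof (rule cont_tau_G[OF p])
    show "\<And>\<xi>. \<xi> \<in> QpX p \<Longrightarrow> F \<xi> \<in> QpX p" unfolding F_def opneg_def using vneg_in[OF p] t(5) by auto
    fix P :: "'x set" and \<xi>0 assume P: "finite P" and x0: "\<xi>0 \<in> EP p P"
    have x0X: "\<xi>0 \<in> QpX p" using EP_QpX[OF p P] x0 by auto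
    define Q where "Q = bad p (T \<xi>0)"
    have Q: "finite Q" unfolding Q_def using QpX_EP(2)[OF p t(5)[OF x0X]] by auto
    define U where "U = {\<xi> \<in> EP p P. T \<xi> \<in> EP p Q}"
    have UX: "U \<subseteq> QpX p" using EP_QpX[OF p P] unfolding U_def by auto
    have "openin (ST p P) U" unfolding U_def by (intro cont_tau_H(1)[OF p] t(2) P Q)
    moreover have "\<xi>0 \<in> U"
      using QpX_EP(1)[OF p t(5)[OF x0X]] x0 unfolding U_def Q_def by auto
    moreover have FU: "F ` U \<subseteq> EP p Q"
    proof
      fix \<eta> assume "\<eta> \<in> F ` U"
      then obtain \<xi> where x: "\<xi> \<in> U" "\<eta> = F \<xi>" by auto
      have "T \<xi> \<in> EP p Q" using x(1) unfolding U_def by auto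
      thus "\<eta> \<in> EP p Q" using x UX qp_neg_in[OF p] Zp_neg[OF p] unfolding F_def EP_def opneg_def by auto
    qed
    moreover have "continuous_map (subtopology (PT p) U) (ST p Q) F"
    proof (rule cont_into_EP[OF p _ FU])
      fix k
      have "continuous_map (subtopology (PT p) U) (Qp_top p) (\<lambda>\<xi>. qp_neg p (T \<xi> k))"
        by (intro cont_neg[OF p] cont_coord[OF p t(2) P Q]) (auto simp: U_def)
      thus "continuous_map (subtopology (PT p) U) (Qp_top p) (\<lambda>\<xi>. F \<xi> k)"
        by (rule continuous_map_eq) (use UX subtop_top[OF p, of U P] in \<open>auto simp: F_def opneg_def U_def\<close>)
    qed
    ultimately show "\<exists>U Q. finite Q \<and> openin (ST p P) U \<and> \<xi>0 \<in> U \<and> F ` U \<subseteq> EP p Q \<and>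
        continuous_map (subtopology (PT p) U) (ST p Q) F" using Q by blast
  qed
  show "opneg p T \<in> extensional (QpX p)" unfolding opneg_def by simp
  show "\<And>\<xi> \<eta>. \<xi> \<in> QpX p \<Longrightarrow> \<eta> \<in> QpX p \<Longrightarrow> opneg p T (vadd p \<xi> \<eta>) = vadd p (opneg p T \<xi>) (opneg p T \<eta>)"
    using vadd_in[OF p] t(3,5) by (auto simp: opneg_def vadd_def qp_neg_add_distrib QpX_Qp[OF p])
  show "\<And>a \<xi>. a \<in> Zp p \<Longrightarrow> \<xi> \<in> QpX p \<Longrightarrow> opneg p T (vsmult p a \<xi>) = vsmult p a (opneg p T \<xi>)"
    using vsmult_in[OF p] t(4,5) Zp_sub[OF p]
    by (auto simp: opneg_def vsmult_def qp_mult_neg[OF p] QpX_Qp[OF p])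
  show "\<And>\<xi>. \<xi> \<in> QpX p \<Longrightarrow> \<xi> \<in> EP p {} \<Longrightarrow> opneg p T \<xi> \<in> EP p {}"
    using t(6) Zp_neg[OF p] unfolding EP_def opneg_def by auto
qed

lemma ring_Bop1: "ring (Bop1_ring p :: (('x \<Rightarrow> qp) \<Rightarrow> ('x \<Rightarrow> qp)) ring)"
proof (rule ringI)
  show "abelian_group (Bop1_ring p :: (('x \<Rightarrow> qp) \<Rightarrow> ('x \<Rightarrow> qp)) ring)"
  proof (rule abelian_groupI, unfold R_carrier R_add R_zero)
    fix x y z :: "('x \<Rightarrow> qp) \<Rightarrow> ('x \<Rightarrow> qp)"
    assume x: "x \<in> Bop1 p"
    note xx = Bop1_D[OF p x]
    show "\<exists>y\<in>Bop1 p. restrict (\<lambda>\<xi>. vadd p (y \<xi>) (x \<xi>)) (QpX p) = restrict (\<lambda>\<xi>. vzero p) (QpX p)"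
    proof (intro bexI[of _ "opneg p x"] neg_Bop1 x)
      show "restrict (\<lambda>\<xi>. vadd p (opneg p x \<xi>) (x \<xi>)) (QpX p) = restrict (\<lambda>\<xi>. vzero p) (QpX p)"
        by (rule ext_eq) (auto simp: opneg_def vadd_def vzero_def qp_neg_add[OF p] QpX_Qp[OF p] xx(5))
    qed
    show "restrict (\<lambda>\<xi>. vadd p (restrict (\<lambda>\<xi>. vzero p) (QpX p) \<xi>) (x \<xi>)) (QpX p) = x"
      by (rule ext_eq[OF _ xx(1)]) (auto simp: vadd_def vzero_def qp_zero_add[OF p] QpX_Qp[OF p] xx(5))
    assume y: "y \<in> Bop1 p"
    note yy = Bop1_D[OF p y]
    show "restrict (\<lambda>\<xi>. vadd p (x \<xi>) (y \<xi>)) (QpX p) \<in> Bop1 p" by (rule add_Bop1[OF x y])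
    show "restrict (\<lambda>\<xi>. vadd p (x \<xi>) (y \<xi>)) (QpX p) = restrict (\<lambda>\<xi>. vadd p (y \<xi>) (x \<xi>)) (QpX p)"
      by (rule ext_eq) (auto simp: vadd_def qp_add_comm[OF p] QpX_Qp[OF p] xx(5) yy(5))
    assume z: "z \<in> Bop1 p"
    note zz = Bop1_D[OF p z]
    show "restrict (\<lambda>\<xi>. vadd p (restrict (\<lambda>\<xi>. vadd p (x \<xi>) (y \<xi>)) (QpX p) \<xi>) (z \<xi>)) (QpX p) =
          restrict (\<lambda>\<xi>. vadd p (x \<xi>) (restrict (\<lambda>\<xi>. vadd p (y \<xi>) (z \<xi>)) (QpX p) \<xi>)) (QpX p)"
      by (rule ext_eq) (auto simp: vadd_def qp_add_assoc[OF p] QpX_Qp[OF p] xx(5) yy(5) zz(5))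
  qed (rule zero_Bop1)
  show "monoid (Bop1_ring p :: (('x \<Rightarrow> qp) \<Rightarrow> ('x \<Rightarrow> qp)) ring)"
  proof (rule monoidI, unfold R_carrier R_mult R_one)
    fix x y z :: "('x \<Rightarrow> qp) \<Rightarrow> ('x \<Rightarrow> qp)"
    assume x: "x \<in> Bop1 p"
    note xx = Bop1_D[OF p x]
    show "restrict (restrict id (QpX p) \<circ> x) (QpX p) = x"
      by (rule ext_eq[OF _ xx(1)]) (auto simp: xx(5))
    show "restrict (x \<circ> restrict id (QpX p)) (QpX p) = x"
      by (rule ext_eq[OF _ xx(1)]) auto
    assume y: "y \<in> Bop1 p"
    note yy = Bop1_D[OF p y]
    show "restrict (x \<circ> y) (QpX p) \<in> Bop1 p" by (rule mult_Bop1[OF x y])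
    assume z: "z \<in> Bop1 p"
    note zz = Bop1_D[OF p z]
    show "restrict (restrict (x \<circ> y) (QpX p) \<circ> z) (QpX p) = restrict (x \<circ> restrict (y \<circ> z) (QpX p)) (QpX p)"
      by (rule ext_eq) (auto simp: zz(5))
  qed (rule one_Bop1)
  fix x y z :: "('x \<Rightarrow> qp) \<Rightarrow> ('x \<Rightarrow> qp)"
  assume x: "x \<in> carrier (Bop1_ring p)" and y: "y \<in> carrier (Bop1_ring p)" and z: "z \<in> carrier (Bop1_ring p)"
  note xx = Bop1_D[OF p x[unfolded R_carrier]] and yy = Bop1_D[OF p y[unfolded R_carrier]]
    and zz = Bop1_D[OF p z[unfolded R_carrier]]
  show "(x \<oplus>\<^bsub>Bop1_ring p\<^esub> y) \<otimes>\<^bsub>Bop1_ring p\<^esub> z = x \<otimes>\<^bsub>Bop1_ring p\<^esub> z \<oplus>\<^bsub>Bop1_ring p\<^esub> y \<otimes>\<^bsub>Bop1_ring p\<^esub> z"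
    unfolding R_add R_mult by (rule ext_eq) (auto simp: zz(5))
  show "z \<otimes>\<^bsub>Bop1_ring p\<^esub> (x \<oplus>\<^bsub>Bop1_ring p\<^esub> y) = z \<otimes>\<^bsub>Bop1_ring p\<^esub> x \<oplus>\<^bsub>Bop1_ring p\<^esub> z \<otimes>\<^bsub>Bop1_ring p\<^esub> y"
    unfolding R_add R_mult by (rule ext_eq) (auto simp: zz(3) xx(5) yy(5) vadd_in[OF p])
qed

end

lemma exists_pairing:
  assumes "countable (UNIV :: 'x set)" "infinite (UNIV :: 'x set)"
  shows "\<exists>(\<beta> :: 'x \<Rightarrow> nat \<times> 'x) \<gamma>. (\<forall>i. \<gamma> (\<beta> i) = i) \<and> (\<forall>z. \<beta> (\<gamma> z) = z)"
proof -
  obtain e :: "'x \<Rightarrow> nat" where e: "bij e" using countableE_infinite[OF assms] by blast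
  define \<beta> where "\<beta> = (\<lambda>i. (fst (prod_decode (e i)), inv_into UNIV e (snd (prod_decode (e i)))))"
  define \<gamma> where "\<gamma> = (\<lambda>(n, x). inv_into UNIV e (prod_encode (n, e x)))"
  have ie: "\<And>x. inv_into UNIV e (e x) = x" "\<And>m. e (inv_into UNIV e m) = m" using e by (auto simp: bij_def surj_f_inv_f)
  have "\<forall>i. \<gamma> (\<beta> i) = i"
  proof
    fix i
    have "\<gamma> (\<beta> i) = inv_into UNIV e (prod_encode (fst (prod_decode (e i)), snd (prod_decode (e i))))"
      unfolding \<beta>_def \<gamma>_def by (simp add: ie)
    also have "\<dots> = i" by (simp add: ie)
    finally show "\<gamma> (\<beta> i) = i" .
  qed
  moreover have "\<forall>z. \<beta> (\<gamma> z) = z"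
    unfolding \<beta>_def \<gamma>_def by (auto simp: ie)
  ultimately show ?thesis by blast
qed

definition reix :: "nat \<Rightarrow> ('x \<Rightarrow> 'x option) \<Rightarrow> ('x \<Rightarrow> qp) \<Rightarrow> ('x \<Rightarrow> qp)" where
  "reix p h = restrict (\<lambda>\<xi> i. case h i of None \<Rightarrow> qp_zero p | Some j \<Rightarrow> \<xi> j) (QpX p)"

definition pinj :: "('x \<Rightarrow> 'x option) \<Rightarrow> bool" where
  "pinj h \<longleftrightarrow> (\<forall>i j k. h i = Some k \<longrightarrow> h j = Some k \<longrightarrow> i = j)"

lemma pinj_finite: assumes "pinj h" shows "finite {i. h i = Some k}"
proof (cases "\<exists>i0. h i0 = Some k")
  case True
  then obtain i0 where "h i0 = Some k" by blast
  hence "{i. h i = Some k} \<subseteq> {i0}" using assms unfolding pinj_def by blast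
  thus ?thesis using finite_subset by blast
qed auto

lemma pinj_finite_pre: assumes "pinj h" "finite B" shows "finite {i. \<exists>k\<in>B. h i = Some k}"
proof -
  have "{i. \<exists>k\<in>B. h i = Some k} = (\<Union>k\<in>B. {i. h i = Some k})" by auto
  thus ?thesis using assms pinj_finite by auto
qed

context fixes p :: nat assumes p: "prime p"
begin

lemma reix_eval: "\<xi> \<in> QpX p \<Longrightarrow> reix p h \<xi> = (\<lambda>i. case h i of None \<Rightarrow> qp_zero p | Some j \<Rightarrow> \<xi> j)"
  unfolding reix_def by simp

lemma reix_QpX: assumes h: "pinj h" and x: "\<xi> \<in> QpX p" shows "reix p h \<xi> \<in> QpX p"
proof -
  have "bad p (reix p h \<xi>) \<subseteq> {i. \<exists>k\<in>bad p \<xi>. h i = Some k}"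
    using qp_abs_zero[OF p] unfolding reix_eval[OF x] by (auto split: option.splits)
  moreover have "finite {i. \<exists>k\<in>bad p \<xi>. h i = Some k}"
    by (rule pinj_finite_pre[OF h]) (use x in \<open>simp add: QpX_def\<close>)
  ultimately have "finite (bad p (reix p h \<xi>))" by (rule finite_subset)
  moreover have "\<forall>i. reix p h \<xi> i \<in> Qp p"
    unfolding reix_eval[OF x] using qp_zero_in[OF p] QpX_Qp[OF p x] by (auto split: option.splits)
  ultimately show ?thesis unfolding QpX_def by blast
qed

lemma reix_Bop1: assumes h: "pinj h" shows "reix p h \<in> Bop1 p"
proof (rule Bop1_I[OF p])
  show "reix p h \<in> extensional (QpX p)" unfolding reix_def by simp
  show "continuous_map (tau p) (tau p) (reix p h)"
  proof (rule cont_tau_G[OF p])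
    show "\<And>\<xi>. \<xi> \<in> QpX p \<Longrightarrow> reix p h \<xi> \<in> QpX p" by (rule reix_QpX[OF h])
    fix P and \<xi>0 :: "'a \<Rightarrow> qp" assume P: "finite P" and x0: "\<xi>0 \<in> EP p P"
    define Q where "Q = {i. \<exists>k\<in>P. h i = Some k}"
    have Q: "finite Q" unfolding Q_def by (rule pinj_finite_pre[OF h P])
    have UX: "EP p P \<subseteq> QpX p" by (rule EP_QpX[OF p P])
    have "openin (ST p P) (EP p P)" by (rule iffD2[OF openin_subtopology_refl EP_top[OF p]])
    moreover have FU: "reix p h ` EP p P \<subseteq> EP p Q"
    proof
      fix \<eta> assume "\<eta> \<in> reix p h ` EP p P"
      then obtain \<xi> where x: "\<xi> \<in> EP p P" "\<eta> = reix p h \<xi>" by auto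
      show "\<eta> \<in> EP p Q" unfolding x(2) reix_eval[OF subsetD[OF UX x(1)]] EP_def
        using x(1) qp_zero_in[OF p] qp_zero_Zp[OF p] Zp_sub[OF p] unfolding EP_def Q_def
        by (auto split: option.splits)
    qed
    moreover have "continuous_map (subtopology (PT p) (EP p P)) (ST p Q) (reix p h)"
    proof (rule cont_into_EP[OF p _ FU])
      fix k
      have "continuous_map (subtopology (PT p) (EP p P)) (Qp_top p)
          (\<lambda>\<xi>. case h k of None \<Rightarrow> qp_zero p | Some j \<Rightarrow> \<xi> j)"
      proof (cases "h k")
        case None thus ?thesis using qp_zero_in[OF p] by (simp add: p)
      next
        case (Some j)
        have "continuous_map (subtopology (PT p) (EP p P)) (Qp_top p) (\<lambda>\<xi>. \<xi> j)"
          by (rule continuous_map_from_subtopology) (rule continuous_map_product_projection, simp)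
        thus ?thesis using Some by simp
      qed
      thus "continuous_map (subtopology (PT p) (EP p P)) (Qp_top p) (\<lambda>\<xi>. reix p h \<xi> k)"
        by (rule continuous_map_eq) (use UX subtop_top[OF p, of "EP p P" P] in \<open>auto simp: reix_eval\<close>)
    qed
    ultimately show "\<exists>U Q. finite Q \<and> openin (ST p P) U \<and> \<xi>0 \<in> U \<and> reix p h ` U \<subseteq> EP p Q \<and>
        continuous_map (subtopology (PT p) U) (ST p Q) (reix p h)" using Q x0 by blast
  qed
  show "reix p h (vadd p \<xi> \<eta>) = vadd p (reix p h \<xi>) (reix p h \<eta>)" if x: "\<xi> \<in> QpX p" and y: "\<eta> \<in> QpX p" for \<xi> \<eta>
    unfolding reix_eval[OF vadd_in[OF p x y]] reix_eval[OF x] reix_eval[OF y]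
    using qp_add_zero[OF p qp_zero_in[OF p]]
    by (auto simp: vadd_def split: option.splits)
  show "reix p h (vsmult p a \<xi>) = vsmult p a (reix p h \<xi>)" if a: "a \<in> Zp p" and x: "\<xi> \<in> QpX p" for a \<xi>
    unfolding reix_eval[OF vsmult_in[OF p a x]] reix_eval[OF x]
    using qp_mult_zero[OF p] Zp_sub[OF p] a
    by (auto simp: vsmult_def intro!: ext split: option.splits)
  show "\<And>\<xi>. \<xi> \<in> QpX p \<Longrightarrow> \<xi> \<in> EP p {} \<Longrightarrow> reix p h \<xi> \<in> EP p {}"
    using qp_zero_Zp[OF p] by (auto simp: reix_eval EP_def split: option.splits)
qed

end

definition Rn :: "(nat \<times> 'x \<Rightarrow> 'x) \<Rightarrow> nat \<Rightarrow> ('x \<Rightarrow> qp) \<Rightarrow> ('x \<Rightarrow> qp)" where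
  "Rn \<gamma> n \<xi> = (\<lambda>x. \<xi> (\<gamma> (n, x)))"

definition phi :: "nat \<Rightarrow> ('x \<Rightarrow> nat \<times> 'x) \<Rightarrow> (nat \<times> 'x \<Rightarrow> 'x) \<Rightarrow> (('x \<Rightarrow> qp) \<Rightarrow> ('x \<Rightarrow> qp)) \<Rightarrow> (('x \<Rightarrow> qp) \<Rightarrow> ('x \<Rightarrow> qp))" where
  "phi p \<beta> \<gamma> T = restrict (\<lambda>\<xi> i. T (Rn \<gamma> (fst (\<beta> i)) \<xi>) (snd (\<beta> i))) (QpX p)"

lemma openin_INT_fin:
  assumes "finite N" "\<And>n. n \<in> N \<Longrightarrow> openin X (A n)"
  shows "openin X (topspace X \<inter> \<Inter>(A ` N))"
  using assms
proof (induction N rule: finite_induct)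
  case empty thus ?case by simp
next
  case (insert n F)
  have "openin X ((topspace X \<inter> \<Inter>(A ` F)) \<inter> A n)" using insert by auto
  moreover have "(topspace X \<inter> \<Inter>(A ` F)) \<inter> A n = topspace X \<inter> \<Inter>(A ` insert n F)" by auto
  ultimately show ?case by simp
qed

context fixes p :: nat and \<beta> :: "'x \<Rightarrow> nat \<times> 'x" and \<gamma> :: "nat \<times> 'x \<Rightarrow> 'x"
  assumes p: "prime p" and bg: "\<And>i. \<gamma> (\<beta> i) = i" and gb: "\<And>z. \<beta> (\<gamma> z) = z"
begin

lemma Rn_QpX: assumes x: "\<xi> \<in> QpX p" shows "Rn \<gamma> n \<xi> \<in> QpX p"
proof -
  have "bad p (Rn \<gamma> n \<xi>) \<subseteq> snd ` \<beta> ` bad p \<xi>"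
  proof
    fix y assume "y \<in> bad p (Rn \<gamma> n \<xi>)"
    hence "\<gamma> (n, y) \<in> bad p \<xi>" unfolding Rn_def by simp
    moreover have "y = snd (\<beta> (\<gamma> (n, y)))" using gb by simp
    ultimately show "y \<in> snd ` \<beta> ` bad p \<xi>" by blast
  qed
  moreover have "finite (snd ` \<beta> ` bad p \<xi>)" using x unfolding QpX_def by auto
  ultimately have "finite (bad p (Rn \<gamma> n \<xi>))" by (rule finite_subset)
  thus ?thesis using x unfolding QpX_def Rn_def by auto
qed

lemma Rn_EP: "\<xi> \<in> EP p P \<Longrightarrow> Rn \<gamma> n \<xi> \<in> EP p {x. \<gamma> (n, x) \<in> P}"
  unfolding EP_def Rn_def by auto

lemma Rn_vadd: "Rn \<gamma> n (vadd p \<xi> \<eta>) = vadd p (Rn \<gamma> n \<xi>) (Rn \<gamma> n \<eta>)"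
  unfolding Rn_def vadd_def by simp

lemma Rn_vsmult: "Rn \<gamma> n (vsmult p a \<xi>) = vsmult p a (Rn \<gamma> n \<xi>)"
  unfolding Rn_def vsmult_def by simp

lemma phi_eval: "\<xi> \<in> QpX p \<Longrightarrow> phi p \<beta> \<gamma> T \<xi> = (\<lambda>i. T (Rn \<gamma> (fst (\<beta> i)) \<xi>) (snd (\<beta> i)))"
  unfolding phi_def by simp

lemma Rn_phi: "\<xi> \<in> QpX p \<Longrightarrow> Rn \<gamma> n (phi p \<beta> \<gamma> T \<xi>) = T (Rn \<gamma> n \<xi>)"
  unfolding phi_eval Rn_def by (simp add: gb)

lemma Rn_outside: assumes x: "\<xi> \<in> QpX p" and n: "n \<notin> fst ` \<beta> ` bad p \<xi>"
  shows "Rn \<gamma> n \<xi> \<in> EP p {}"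
proof -
  have "\<And>y. \<gamma> (n, y) \<notin> bad p \<xi>"
  proof
    fix y assume "\<gamma> (n, y) \<in> bad p \<xi>"
    hence "fst (\<beta> (\<gamma> (n, y))) \<in> fst ` \<beta> ` bad p \<xi>" by blast
    thus False using n gb by simp
  qed
  hence "\<And>y. qp_abs p (\<xi> (\<gamma> (n, y))) \<le> 1" by (simp add: not_less)
  thus ?thesis using x unfolding EP_def Zp_def Rn_def QpX_def by auto
qed

lemma phi_QpX: assumes T: "T \<in> Bop1 p" and x: "\<xi> \<in> QpX p" shows "phi p \<beta> \<gamma> T \<xi> \<in> QpX p"
proof -
  note t = Bop1_D[OF p T]
  define N where "N = fst ` \<beta> ` bad p \<xi>"
  have N: "finite N" using x unfolding N_def QpX_def by auto
  have "bad p (phi p \<beta> \<gamma> T \<xi>) \<subseteq> \<gamma> ` (SIGMA n:N. bad p (T (Rn \<gamma> n \<xi>)))"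
  proof
    fix i assume i: "i \<in> bad p (phi p \<beta> \<gamma> T \<xi>)"
    define n where "n = fst (\<beta> i)"
    define y where "y = snd (\<beta> i)"
    have iy: "i = \<gamma> (n, y)" using bg[of i] unfolding n_def y_def by simp
    have b: "y \<in> bad p (T (Rn \<gamma> n \<xi>))" using i unfolding phi_eval[OF x] n_def y_def by simp
    have "n \<in> N"
    proof (rule ccontr)
      assume "n \<notin> N"
      hence "Rn \<gamma> n \<xi> \<in> EP p {}" unfolding N_def by (rule Rn_outside[OF x])
      hence "T (Rn \<gamma> n \<xi>) \<in> EP p {}" by (rule t(6)[OF Rn_QpX[OF x]])
      hence "qp_abs p (T (Rn \<gamma> n \<xi>) y) \<le> 1" unfolding EP_def Zp_def by blast
      thus False using b by simp
    qed
    hence "(n, y) \<in> (SIGMA n:N. bad p (T (Rn \<gamma> n \<xi>)))" using b by simp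
    thus "i \<in> \<gamma> ` (SIGMA n:N. bad p (T (Rn \<gamma> n \<xi>)))" unfolding iy by (rule imageI)
  qed
  moreover have "finite (\<gamma> ` (SIGMA n:N. bad p (T (Rn \<gamma> n \<xi>))))"
    by (intro finite_imageI finite_SigmaI N QpX_EP(2)[OF p t(5)[OF Rn_QpX[OF x]]])
  ultimately have "finite (bad p (phi p \<beta> \<gamma> T \<xi>))" by (rule finite_subset)
  moreover have "\<forall>i. phi p \<beta> \<gamma> T \<xi> i \<in> Qp p"
    unfolding phi_eval[OF x] using QpX_Qp[OF p t(5)[OF Rn_QpX[OF x]]] by simp
  ultimately show ?thesis unfolding QpX_def by blast
qed

lemma Rn_cont: "continuous_map (subtopology (PT p) U) (PT p) (Rn \<gamma> n)"
proof -
  have "\<And>k. continuous_map (subtopology (PT p) U) (Qp_top p) (\<lambda>\<xi>. \<xi> (\<gamma> (n, k)))"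
    by (rule continuous_map_from_subtopology) (rule continuous_map_product_projection, simp)
  thus ?thesis by (simp add: continuous_map_componentwise_UNIV Rn_def)
qed

lemma phi_Bop1: assumes T: "T \<in> Bop1 p" shows "phi p \<beta> \<gamma> T \<in> Bop1 p"
proof (rule Bop1_I[OF p])
  note t = Bop1_D[OF p T]
  define F where "F = phi p \<beta> \<gamma> T"
  show "phi p \<beta> \<gamma> T \<in> extensional (QpX p)" unfolding phi_def by simp
  show "continuous_map (tau p) (tau p) (phi p \<beta> \<gamma> T)"
    unfolding F_def[symmetric]
  proof (rule cont_tau_G[OF p])
    show "\<And>\<xi>. \<xi> \<in> QpX p \<Longrightarrow> F \<xi> \<in> QpX p" unfolding F_def by (rule phi_QpX[OF T])
    fix P and \<xi>0 :: "'x \<Rightarrow> qp" assume P: "finite P" and x0: "\<xi>0 \<in> EP p P"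
    have PX: "EP p P \<subseteq> QpX p" by (rule EP_QpX[OF p P])
    have x0X: "\<xi>0 \<in> QpX p" using PX x0 by auto
    define N where "N = fst ` \<beta> ` P"
    have N: "finite N" unfolding N_def using P by auto
    define Qn where "Qn n = (if n \<in> N then bad p (T (Rn \<gamma> n \<xi>0)) else {})" for n
    have Qn: "finite (Qn n)" for n unfolding Qn_def using QpX_EP(2)[OF p t(5)[OF Rn_QpX[OF x0X]]] by auto
    define Pn where "Pn n = {x. \<gamma> (n, x) \<in> P}" for n
    have Pn: "finite (Pn n)" for n
    proof -
      have "Pn n \<subseteq> snd ` \<beta> ` P"
      proof
        fix x assume "x \<in> Pn n"
        hence "\<gamma> (n, x) \<in> P" unfolding Pn_def by simp
        moreover have "x = snd (\<beta> (\<gamma> (n, x)))" using gb by simp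
        ultimately show "x \<in> snd ` \<beta> ` P" by blast
      qed
      thus ?thesis using P finite_subset by blast
    qed
    have PnN: "Pn n = {}" if "n \<notin> N" for n
    proof -
      have "\<gamma> (n, x) \<notin> P" for x
      proof
        assume "\<gamma> (n, x) \<in> P"
        hence "fst (\<beta> (\<gamma> (n, x))) \<in> N" unfolding N_def by blast
        thus False using that gb by simp
      qed
      thus ?thesis unfolding Pn_def by auto
    qed
    define Q where "Q = \<gamma> ` (SIGMA n:N. Qn n)"
    have Q: "finite Q" unfolding Q_def using N Qn by auto
    define W where "W n = {\<eta> \<in> EP p (Pn n). T \<eta> \<in> EP p (Qn n)}" for n
    define U where "U = {\<xi> \<in> EP p P. \<forall>n. Rn \<gamma> n \<xi> \<in> W n}"
    have UX: "U \<subseteq> QpX p" using PX unfolding U_def by auto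
    have RnP: "\<xi> \<in> EP p P \<Longrightarrow> Rn \<gamma> n \<xi> \<in> EP p (Pn n)" for \<xi> n unfolding Pn_def by (rule Rn_EP)
    have autoW: "Rn \<gamma> n \<xi> \<in> W n" if "\<xi> \<in> EP p P" "n \<notin> N" for \<xi> n
    proof -
      have "Rn \<gamma> n \<xi> \<in> EP p {}" using RnP[of \<xi> n, OF that(1)] unfolding PnN[OF that(2)] .
      moreover have "Rn \<gamma> n \<xi> \<in> QpX p" using Rn_QpX that(1) PX by auto
      ultimately have "T (Rn \<gamma> n \<xi>) \<in> EP p {}" using t(6) by blast
      hence "T (Rn \<gamma> n \<xi>) \<in> EP p (Qn n)" using EP_mono[OF p, of "{}" "Qn n"] by auto
      thus ?thesis unfolding W_def using RnP[of \<xi> n, OF that(1)] by auto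
    qed
    have tST: "topspace (ST p P) = EP p P" by (rule subtop_top[OF p]) auto
    have Ueq: "U = topspace (ST p P) \<inter> \<Inter>((\<lambda>n. {\<xi> \<in> topspace (ST p P). Rn \<gamma> n \<xi> \<in> W n}) ` N)"
      unfolding tST U_def using autoW by auto
    have "openin (ST p P) U"
      unfolding Ueq
    proof (rule openin_INT_fin[OF N])
      fix n assume "n \<in> N"
      have c: "continuous_map (ST p P) (ST p (Pn n)) (Rn \<gamma> n)"
        by (rule continuous_map_into_subtopology[OF Rn_cont]) (use RnP tST in auto)
      show "openin (ST p P) {\<xi> \<in> topspace (ST p P). Rn \<gamma> n \<xi> \<in> W n}"
        unfolding W_def by (rule openin_continuous_map_preimage[OF c cont_tau_H(1)[OF p t(2) Pn Qn]])
    qed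
    moreover have "\<xi>0 \<in> U"
    proof -
      have "Rn \<gamma> n \<xi>0 \<in> W n" for n
      proof (cases "n \<in> N")
        case True
        thus ?thesis unfolding W_def Qn_def using RnP[OF x0] QpX_EP(1)[OF p t(5)[OF Rn_QpX[OF x0X]]] by auto
      qed (rule autoW[OF x0])
      thus ?thesis using x0 unfolding U_def by auto
    qed
    moreover have FU: "F ` U \<subseteq> EP p Q"
    proof
      fix \<eta> assume "\<eta> \<in> F ` U"
      then obtain \<xi> where x: "\<xi> \<in> U" "\<eta> = F \<xi>" by auto
      have xX: "\<xi> \<in> QpX p" using x(1) UX by auto
      show "\<eta> \<in> EP p Q" unfolding EP_def
      proof (rule CollectI, intro conjI allI ballI impI)
        fix i
        have "T (Rn \<gamma> (fst (\<beta> i)) \<xi>) \<in> QpX p" using t(5)[OF Rn_QpX[OF xX]] .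
        thus "\<eta> i \<in> Qp p" if "i \<in> Q" unfolding x(2) F_def phi_eval[OF xX] by (rule QpX_Qp[OF p])
        assume iQ: "i \<notin> Q"
        have "snd (\<beta> i) \<notin> Qn (fst (\<beta> i))"
        proof
          assume a: "snd (\<beta> i) \<in> Qn (fst (\<beta> i))"
          hence "fst (\<beta> i) \<in> N" unfolding Qn_def by (auto split: if_splits)
          hence "(fst (\<beta> i), snd (\<beta> i)) \<in> (SIGMA n:N. Qn n)" using a by (intro SigmaI)
          hence "\<gamma> (fst (\<beta> i), snd (\<beta> i)) \<in> Q" unfolding Q_def by (rule imageI)
          thus False using iQ bg[of i] by simp
        qed
        moreover have "T (Rn \<gamma> (fst (\<beta> i)) \<xi>) \<in> EP p (Qn (fst (\<beta> i)))" using x(1) unfolding U_def W_def by auto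
        ultimately show "\<eta> i \<in> Zp p" unfolding x(2) F_def phi_eval[OF xX] EP_def by auto
      qed
    qed
    moreover have "continuous_map (subtopology (PT p) U) (ST p Q) F"
    proof (rule cont_into_EP[OF p _ FU])
      fix k
      define n where "n = fst (\<beta> k)"
      define y where "y = snd (\<beta> k)"
      have c1: "continuous_map (subtopology (PT p) U) (subtopology (PT p) (W n)) (Rn \<gamma> n)"
        by (rule continuous_map_into_subtopology[OF Rn_cont]) (use subtop_top[OF p, of U P] U_def in auto)
      have c2: "continuous_map (subtopology (PT p) (W n)) (Qp_top p) (\<lambda>\<eta>. T \<eta> y)"
        by (rule cont_coord[OF p t(2) Pn Qn]) (auto simp: W_def)
      have "continuous_map (subtopology (PT p) U) (Qp_top p) ((\<lambda>\<eta>. T \<eta> y) \<circ> Rn \<gamma> n)"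
        by (rule continuous_map_compose[OF c1 c2])
      thus "continuous_map (subtopology (PT p) U) (Qp_top p) (\<lambda>\<xi>. F \<xi> k)"
        by (rule continuous_map_eq) (use UX subtop_top[OF p, of U P] U_def in \<open>auto simp: F_def phi_eval n_def y_def\<close>)
    qed
    ultimately show "\<exists>U Q. finite Q \<and> openin (ST p P) U \<and> \<xi>0 \<in> U \<and> F ` U \<subseteq> EP p Q \<and>
        continuous_map (subtopology (PT p) U) (ST p Q) F" using Q by blast
  qed
  show "phi p \<beta> \<gamma> T (vadd p \<xi> \<eta>) = vadd p (phi p \<beta> \<gamma> T \<xi>) (phi p \<beta> \<gamma> T \<eta>)" if x: "\<xi> \<in> QpX p" and y: "\<eta> \<in> QpX p" for \<xi> \<eta>
    unfolding phi_eval[OF vadd_in[OF p x y]] phi_eval[OF x] phi_eval[OF y] Rn_vadd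
    using t(3)[OF Rn_QpX[OF x] Rn_QpX[OF y]] by (simp add: vadd_def)
  show "phi p \<beta> \<gamma> T (vsmult p a \<xi>) = vsmult p a (phi p \<beta> \<gamma> T \<xi>)" if a: "a \<in> Zp p" and x: "\<xi> \<in> QpX p" for a \<xi>
    unfolding phi_eval[OF vsmult_in[OF p a x]] phi_eval[OF x] Rn_vsmult
    using t(4)[OF a Rn_QpX[OF x]] by (simp add: vsmult_def)
  show "phi p \<beta> \<gamma> T \<xi> \<in> EP p {}" if x: "\<xi> \<in> QpX p" and e: "\<xi> \<in> EP p {}" for \<xi>
  proof -
    have "T (Rn \<gamma> n \<xi>) \<in> EP p {}" for n using t(6)[OF Rn_QpX[OF x]] Rn_EP[OF e, of n] by simp
    thus ?thesis unfolding phi_eval[OF x] EP_def by auto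
  qed
qed

end

context fixes p :: nat and \<beta> :: "'x \<Rightarrow> nat \<times> 'x" and \<gamma> :: "nat \<times> 'x \<Rightarrow> 'x"
  assumes p: "prime p" and bg: "\<And>i. \<gamma> (\<beta> i) = i" and gb: "\<And>z. \<beta> (\<gamma> z) = z"
begin

lemma bg': "\<gamma> (fst (\<beta> i), snd (\<beta> i)) = i" using bg[of i] by simp

lemma gb1[simp]: "fst (\<beta> (\<gamma> (n, x))) = n" "snd (\<beta> (\<gamma> (n, x))) = x" using gb[of "(n, x)"] by auto

definition "hA0 = (\<lambda>x. Some (\<gamma> (0, x)))"
definition "hB0 = (\<lambda>i. if fst (\<beta> i) = 0 then Some (snd (\<beta> i)) else None)"
definition "hA1 = (\<lambda>i. Some (\<gamma> (Suc (fst (\<beta> i)), snd (\<beta> i))))"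
definition "hB1 = (\<lambda>i. case fst (\<beta> i) of 0 \<Rightarrow> None | Suc n \<Rightarrow> Some (\<gamma> (n, snd (\<beta> i))))"

lemma pinjs: "pinj hA0" "pinj hB0" "pinj hA1" "pinj hB1"
proof -
  show "pinj hA0" unfolding pinj_def hA0_def by (metis gb1(2) option.inject)
  show "pinj hB0" unfolding pinj_def hB0_def
    by (metis (no_types, lifting) bg' option.distinct(1) option.inject)
  show "pinj hA1" unfolding pinj_def hA1_def
    by (metis bg' gb1 nat.inject option.inject)
  show "pinj hB1" unfolding pinj_def hB1_def
    by (auto split: nat.splits) (metis bg' gb1 nat.inject)+
qed

abbreviation "BR \<equiv> (Bop1_ring p :: (('x \<Rightarrow> qp) \<Rightarrow> ('x \<Rightarrow> qp)) ring)"

lemma ops_carrier: "reix p hA0 \<in> carrier BR" "reix p hB0 \<in> carrier BR" "reix p hA1 \<in> carrier BR" "reix p hB1 \<in> carrier BR"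
  using reix_Bop1[OF p] pinjs by auto

lemma reix_ext: "reix p h \<in> extensional (QpX p)" unfolding reix_def by simp

lemma reix_apply: "\<xi> \<in> QpX p \<Longrightarrow> reix p h \<xi> i = (case h i of None \<Rightarrow> qp_zero p | Some j \<Rightarrow> \<xi> j)"
  by (simp add: reix_eval[OF p])

lemma phi_apply: "\<xi> \<in> QpX p \<Longrightarrow> phi p \<beta> \<gamma> T \<xi> i = T (Rn \<gamma> (fst (\<beta> i)) \<xi>) (snd (\<beta> i))"
  by (simp add: phi_eval[OF p bg gb])

lemma rcases: obtains (Z) "fst (\<beta> i) = 0" | (S) m where "fst (\<beta> i) = Suc m"
  by (cases "fst (\<beta> i)") auto

lemma A0B0: "reix p hA0 \<otimes>\<^bsub>BR\<^esub> reix p hB0 = \<one>\<^bsub>BR\<^esub>"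
  unfolding R_mult R_one
proof (rule ext_eq)
  fix \<xi> :: "'x \<Rightarrow> qp" assume x: "\<xi> \<in> QpX p"
  have y: "reix p hB0 \<xi> \<in> QpX p" by (rule reix_QpX[OF p pinjs(2) x])
  have "reix p hA0 (reix p hB0 \<xi>) = \<xi>"
    by (rule ext) (simp add: reix_apply x y, simp add: reix_apply x hA0_def hB0_def)
  thus "restrict (reix p hA0 \<circ> reix p hB0) (QpX p) \<xi> = restrict id (QpX p) \<xi>"
    using x by simp
qed auto

lemma A1B1: "reix p hA1 \<otimes>\<^bsub>BR\<^esub> reix p hB1 = \<one>\<^bsub>BR\<^esub>"
  unfolding R_mult R_one
proof (rule ext_eq)
  fix \<xi> :: "'x \<Rightarrow> qp" assume x: "\<xi> \<in> QpX p"
  have y: "reix p hB1 \<xi> \<in> QpX p" by (rule reix_QpX[OF p pinjs(4) x])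
  have "reix p hA1 (reix p hB1 \<xi>) = \<xi>"
    by (rule ext) (simp add: reix_apply x y, simp add: reix_apply x hA1_def hB1_def bg' bg)
  thus "restrict (reix p hA1 \<circ> reix p hB1) (QpX p) \<xi> = restrict id (QpX p) \<xi>"
    using x by simp
qed auto

lemma sum_one: "(reix p hB0 \<otimes>\<^bsub>BR\<^esub> reix p hA0) \<oplus>\<^bsub>BR\<^esub> (reix p hB1 \<otimes>\<^bsub>BR\<^esub> reix p hA1) = \<one>\<^bsub>BR\<^esub>"
  unfolding R_mult R_one R_add
proof (rule ext_eq)
  fix \<xi> :: "'x \<Rightarrow> qp" assume x: "\<xi> \<in> QpX p"
  have y0: "reix p hA0 \<xi> \<in> QpX p" by (rule reix_QpX[OF p pinjs(1) x])
  have y1: "reix p hA1 \<xi> \<in> QpX p" by (rule reix_QpX[OF p pinjs(3) x])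
  have "vadd p (reix p hB0 (reix p hA0 \<xi>)) (reix p hB1 (reix p hA1 \<xi>)) = \<xi>"
  proof
    fix i
    show "vadd p (reix p hB0 (reix p hA0 \<xi>)) (reix p hB1 (reix p hA1 \<xi>)) i = \<xi> i"
    proof (cases i rule: rcases)
      case Z
      have "\<gamma> (0, snd (\<beta> i)) = i" using bg'[of i] Z by simp
      thus ?thesis using Z qp_add_zero[OF p QpX_Qp[OF p x]]
        by (simp add: vadd_def reix_apply x y0 y1, simp add: reix_apply x hA0_def hB0_def hA1_def hB1_def)
    next
      case (S m)
      have "\<gamma> (Suc m, snd (\<beta> i)) = i" using bg'[of i] S by simp
      thus ?thesis using S qp_zero_add[OF p QpX_Qp[OF p x]]
        by (simp add: vadd_def reix_apply x y0 y1, simp add: reix_apply x hA0_def hB0_def hA1_def hB1_def)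
    qed
  qed
  thus "restrict (\<lambda>\<xi>. vadd p (restrict (reix p hB0 \<circ> reix p hA0) (QpX p) \<xi>) (restrict (reix p hB1 \<circ> reix p hA1) (QpX p) \<xi>)) (QpX p) \<xi> =
    restrict id (QpX p) \<xi>" using x by simp
qed auto

lemma phi_hom: "phi p \<beta> \<gamma> \<in> ring_hom BR BR"
proof (rule ring_hom_memI)
  show "\<And>x. x \<in> carrier BR \<Longrightarrow> phi p \<beta> \<gamma> x \<in> carrier BR" using phi_Bop1[OF p bg gb] by simp
  fix x y :: "('x \<Rightarrow> qp) \<Rightarrow> ('x \<Rightarrow> qp)" assume x: "x \<in> carrier BR" and y: "y \<in> carrier BR"
  note xx = Bop1_D[OF p x[unfolded R_carrier]] and yy = Bop1_D[OF p y[unfolded R_carrier]]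
  show "phi p \<beta> \<gamma> (x \<otimes>\<^bsub>BR\<^esub> y) = phi p \<beta> \<gamma> x \<otimes>\<^bsub>BR\<^esub> phi p \<beta> \<gamma> y"
    unfolding R_mult
  proof (rule ext_eq)
    show "phi p \<beta> \<gamma> (restrict (x \<circ> y) (QpX p)) \<in> extensional (QpX p)" unfolding phi_def by simp
    fix \<xi> :: "'x \<Rightarrow> qp" assume xi: "\<xi> \<in> QpX p"
    have q: "phi p \<beta> \<gamma> y \<xi> \<in> QpX p" by (rule phi_QpX[OF p bg gb y[unfolded R_carrier] xi])
    have "phi p \<beta> \<gamma> (restrict (x \<circ> y) (QpX p)) \<xi> = phi p \<beta> \<gamma> x (phi p \<beta> \<gamma> y \<xi>)"
      by (rule ext) (simp add: phi_apply xi q Rn_phi[OF p bg gb xi] Rn_QpX[OF p bg gb xi])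
    thus "phi p \<beta> \<gamma> (restrict (x \<circ> y) (QpX p)) \<xi> = restrict (phi p \<beta> \<gamma> x \<circ> phi p \<beta> \<gamma> y) (QpX p) \<xi>"
      using xi by simp
  qed simp
  show "phi p \<beta> \<gamma> (x \<oplus>\<^bsub>BR\<^esub> y) = phi p \<beta> \<gamma> x \<oplus>\<^bsub>BR\<^esub> phi p \<beta> \<gamma> y"
    unfolding R_add
  proof (rule ext_eq)
    show "phi p \<beta> \<gamma> (restrict (\<lambda>\<xi>. vadd p (x \<xi>) (y \<xi>)) (QpX p)) \<in> extensional (QpX p)" unfolding phi_def by simp
    fix \<xi> :: "'x \<Rightarrow> qp" assume xi: "\<xi> \<in> QpX p"
    show "phi p \<beta> \<gamma> (restrict (\<lambda>\<xi>. vadd p (x \<xi>) (y \<xi>)) (QpX p)) \<xi> =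
        restrict (\<lambda>\<xi>. vadd p (phi p \<beta> \<gamma> x \<xi>) (phi p \<beta> \<gamma> y \<xi>)) (QpX p) \<xi>"
      using xi unfolding phi_eval[OF p bg gb xi]
      by (simp add: Rn_QpX[OF p bg gb xi] vadd_def phi_apply)
  qed simp
next
  show "phi p \<beta> \<gamma> \<one>\<^bsub>BR\<^esub> = \<one>\<^bsub>BR\<^esub>"
    unfolding R_one
  proof (rule ext_eq)
    show "phi p \<beta> \<gamma> (restrict id (QpX p)) \<in> extensional (QpX p)" unfolding phi_def by simp
    fix \<xi> :: "'x \<Rightarrow> qp" assume xi: "\<xi> \<in> QpX p"
    show "phi p \<beta> \<gamma> (restrict id (QpX p)) \<xi> = restrict id (QpX p) \<xi>"
      using xi unfolding phi_eval[OF p bg gb xi]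
      by (simp add: Rn_QpX[OF p bg gb xi], simp add: Rn_def bg' bg)
  qed simp
qed

lemma boxplus_phi: assumes a: "a \<in> carrier BR"
  shows "boxplus BR (reix p hA0) (reix p hB0) (reix p hA1) (reix p hB1) a (phi p \<beta> \<gamma> a) = phi p \<beta> \<gamma> a"
  unfolding boxplus_def R_mult R_add
proof (rule ext_eq)
  show "phi p \<beta> \<gamma> a \<in> extensional (QpX p)" unfolding phi_def by simp
  note aa = Bop1_D[OF p a[unfolded R_carrier]]
  fix \<xi> :: "'x \<Rightarrow> qp" assume x: "\<xi> \<in> QpX p"
  have y0: "reix p hA0 \<xi> \<in> QpX p" by (rule reix_QpX[OF p pinjs(1) x])
  have y1: "reix p hA1 \<xi> \<in> QpX p" by (rule reix_QpX[OF p pinjs(3) x])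
  have z0: "a (reix p hA0 \<xi>) \<in> QpX p" by (rule aa(5)[OF y0])
  have z1: "phi p \<beta> \<gamma> a (reix p hA1 \<xi>) \<in> QpX p" by (rule phi_QpX[OF p bg gb a[unfolded R_carrier] y1])
  have e0: "reix p hA0 \<xi> = Rn \<gamma> 0 \<xi>" unfolding reix_eval[OF p x] Rn_def hA0_def by simp
  have e1: "Rn \<gamma> m (reix p hA1 \<xi>) = Rn \<gamma> (Suc m) \<xi>" for m unfolding reix_eval[OF p x] Rn_def hA1_def by simp
  have "vadd p (reix p hB0 (a (reix p hA0 \<xi>))) (reix p hB1 (phi p \<beta> \<gamma> a (reix p hA1 \<xi>))) = phi p \<beta> \<gamma> a \<xi>"
  proof
    fix i
    show "vadd p (reix p hB0 (a (reix p hA0 \<xi>))) (reix p hB1 (phi p \<beta> \<gamma> a (reix p hA1 \<xi>))) i = phi p \<beta> \<gamma> a \<xi> i"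
    proof (cases i rule: rcases)
      case Z
      have "a (Rn \<gamma> 0 \<xi>) (snd (\<beta> i)) \<in> Qp p" by (rule QpX_Qp[OF p aa(5)[OF Rn_QpX[OF p bg gb x]]])
      thus ?thesis using Z qp_add_zero[OF p]
        by (simp add: vadd_def reix_apply z0 z1 phi_apply x, simp add: hB0_def hB1_def e0)
    next
      case (S m)
      have "a (Rn \<gamma> (Suc m) \<xi>) (snd (\<beta> i)) \<in> Qp p" by (rule QpX_Qp[OF p aa(5)[OF Rn_QpX[OF p bg gb x]]])
      thus ?thesis using S qp_zero_add[OF p]
        by (simp add: vadd_def reix_apply z0 z1 phi_apply x, simp add: hB0_def hB1_def phi_apply[OF y1] e1)
    qed
  qed
  moreover have "restrict (restrict (reix p hB0 \<circ> a) (QpX p) \<circ> reix p hA0) (QpX p) \<xi> = reix p hB0 (a (reix p hA0 \<xi>))"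
    using x y0 by simp
  moreover have "restrict (restrict (reix p hB1 \<circ> phi p \<beta> \<gamma> a) (QpX p) \<circ> reix p hA1) (QpX p) \<xi> = reix p hB1 (phi p \<beta> \<gamma> a (reix p hA1 \<xi>))"
    using x y1 by simp
  ultimately show "restrict (\<lambda>\<xi>. vadd p (restrict (restrict (reix p hB0 \<circ> a) (QpX p) \<circ> reix p hA0) (QpX p) \<xi>)
           (restrict (restrict (reix p hB1 \<circ> phi p \<beta> \<gamma> a) (QpX p) \<circ> reix p hA1) (QpX p) \<xi>)) (QpX p) \<xi> = phi p \<beta> \<gamma> a \<xi>"
    using x by simp
qed simp

lemma infsum: "infinite_sum_ring BR"
  unfolding infinite_sum_ring_def
proof (intro conjI exI)
  show "ring BR" by (rule ring_Bop1[OF p])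
  show "sum_ring_data BR (reix p hA0) (reix p hB0) (reix p hA1) (reix p hB1)"
    unfolding sum_ring_data_def using ops_carrier A0B0 A1B1 sum_one by auto
  show "phi p \<beta> \<gamma> \<in> ring_hom BR BR" by (rule phi_hom)
  show "\<forall>a\<in>carrier BR. boxplus BR (reix p hA0) (reix p hB0) (reix p hA1) (reix p hB1) a (phi p \<beta> \<gamma> a) = phi p \<beta> \<gamma> a"
    using boxplus_phi by blast
qed

end

lemma infsum_main:
  assumes "prime p" "countable (UNIV :: 'x set)" "infinite (UNIV :: 'x set)"
  shows "infinite_sum_ring (Bop1_ring p :: (('x \<Rightarrow> qp) \<Rightarrow> ('x \<Rightarrow> qp)) ring)"
proof -
  obtain \<beta> :: "'x \<Rightarrow> nat \<times> 'x" and \<gamma> where "\<forall>i. \<gamma> (\<beta> i) = i" "\<forall>z. \<beta> (\<gamma> z) = z"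
    using exists_pairing[OF assms(2,3)] by blast
  thus ?thesis using infsum[OF assms(1)] by blast
qed

context ring begin

lemma double_zero: "x \<in> carrier R \<Longrightarrow> x = x \<oplus> x \<Longrightarrow> x = \<zero>"
  by (metis add.l_cancel_one' zero_closed)

context fixes a0 b0 a1 b1
  assumes c[simp]: "a0 \<in> carrier R" "b0 \<in> carrier R" "a1 \<in> carrier R" "b1 \<in> carrier R"
    and e1: "a0 \<otimes> b0 = \<one>" and e2: "a1 \<otimes> b1 = \<one>" and e3: "b0 \<otimes> a0 \<oplus> b1 \<otimes> a1 = \<one>"
begin

lemma ab01: "a0 \<otimes> b1 = \<zero>"
proof -
  have "a0 \<otimes> b1 = a0 \<otimes> (b0 \<otimes> a0 \<oplus> b1 \<otimes> a1) \<otimes> b1" using e3 by simp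
  also have "\<dots> = (a0 \<otimes> b0) \<otimes> (a0 \<otimes> b1) \<oplus> (a0 \<otimes> b1) \<otimes> (a1 \<otimes> b1)" by (simp add: r_distr l_distr m_assoc)
  also have "\<dots> = a0 \<otimes> b1 \<oplus> a0 \<otimes> b1" using e1 e2 by simp
  finally show ?thesis by (rule double_zero[rotated]) simp
qed

lemma ab10: "a1 \<otimes> b0 = \<zero>"
proof -
  have "a1 \<otimes> b0 = a1 \<otimes> (b0 \<otimes> a0 \<oplus> b1 \<otimes> a1) \<otimes> b0" using e3 by simp
  also have "\<dots> = (a1 \<otimes> b0) \<otimes> (a0 \<otimes> b0) \<oplus> (a1 \<otimes> b1) \<otimes> (a1 \<otimes> b0)" by (simp add: r_distr l_distr m_assoc)
  also have "\<dots> = a1 \<otimes> b0 \<oplus> a1 \<otimes> b0" using e1 e2 by simp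
  finally show ?thesis by (rule double_zero[rotated]) simp
qed

lemma R1: "x \<in> carrier R \<Longrightarrow> a0 \<otimes> (b0 \<otimes> x) = x" by (simp add: m_assoc[symmetric] e1)
lemma R2: "x \<in> carrier R \<Longrightarrow> a1 \<otimes> (b1 \<otimes> x) = x" by (simp add: m_assoc[symmetric] e2)
lemma R3: "x \<in> carrier R \<Longrightarrow> a0 \<otimes> (b1 \<otimes> x) = \<zero>" by (simp add: m_assoc[symmetric] ab01)
lemma R4: "x \<in> carrier R \<Longrightarrow> a1 \<otimes> (b0 \<otimes> x) = \<zero>" by (simp add: m_assoc[symmetric] ab10)

lemmas RR = e1 e2 ab01 ab10 R1 R2 R3 R4

context fixes E F assumes cEF[simp]: "E \<in> carrier R" "F \<in> carrier R"
  and FF: "F \<otimes> F = F" and box: "b0 \<otimes> E \<otimes> a0 \<oplus> b1 \<otimes> F \<otimes> a1 = F"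
begin

lemma d1: "a0 \<otimes> F = E \<otimes> a0"
proof -
  have "a0 \<otimes> F = a0 \<otimes> (b0 \<otimes> E \<otimes> a0 \<oplus> b1 \<otimes> F \<otimes> a1)" using box by simp
  also have "\<dots> = E \<otimes> a0" by (simp add: r_distr m_assoc RR)
  finally show ?thesis .
qed

lemma d2: "F \<otimes> b0 = b0 \<otimes> E"
proof -
  have "F \<otimes> b0 = (b0 \<otimes> E \<otimes> a0 \<oplus> b1 \<otimes> F \<otimes> a1) \<otimes> b0" using box by simp
  also have "\<dots> = b0 \<otimes> E" by (simp add: l_distr m_assoc RR)
  finally show ?thesis .
qed

lemma d3: "a1 \<otimes> F = F \<otimes> a1"
proof -
  have "a1 \<otimes> F = a1 \<otimes> (b0 \<otimes> E \<otimes> a0 \<oplus> b1 \<otimes> F \<otimes> a1)" using box by simp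
  also have "\<dots> = F \<otimes> a1" by (simp add: r_distr m_assoc RR)
  finally show ?thesis .
qed

lemma d4: "F \<otimes> b1 = b1 \<otimes> F"
proof -
  have "F \<otimes> b1 = (b0 \<otimes> E \<otimes> a0 \<oplus> b1 \<otimes> F \<otimes> a1) \<otimes> b1" using box by simp
  also have "\<dots> = b1 \<otimes> F" by (simp add: l_distr m_assoc RR)
  finally show ?thesis .
qed

lemma d1': "x \<in> carrier R \<Longrightarrow> a0 \<otimes> (F \<otimes> x) = E \<otimes> (a0 \<otimes> x)" by (simp add: m_assoc[symmetric] d1)
lemma d2': "x \<in> carrier R \<Longrightarrow> F \<otimes> (b0 \<otimes> x) = b0 \<otimes> (E \<otimes> x)" by (simp add: m_assoc[symmetric] d2)
lemma d3': "x \<in> carrier R \<Longrightarrow> a1 \<otimes> (F \<otimes> x) = F \<otimes> (a1 \<otimes> x)" by (simp add: m_assoc[symmetric] d3)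
lemma d4': "x \<in> carrier R \<Longrightarrow> F \<otimes> (b1 \<otimes> x) = b1 \<otimes> (F \<otimes> x)" by (simp add: m_assoc[symmetric] d4)
lemma FF': "x \<in> carrier R \<Longrightarrow> F \<otimes> (F \<otimes> x) = F \<otimes> x" by (simp add: m_assoc[symmetric] FF)

lemmas DD = d1 d2 d3 d4 d1' d2' d3' d4' FF FF'

lemma I1: "(F \<otimes> a1 \<oplus> (\<one> \<ominus> F)) \<otimes> (b1 \<otimes> F \<oplus> (\<one> \<ominus> F)) = \<one>"
  by (simp add: ring_simprules RR DD)

lemma I2: "(b1 \<otimes> F \<oplus> (\<one> \<ominus> F)) \<otimes> (F \<otimes> a1 \<oplus> (\<one> \<ominus> F)) \<oplus> b0 \<otimes> E \<otimes> a0 = \<one>"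
  using box by (simp add: ring_simprules RR DD)

lemma I3: assumes u: "u \<in> carrier R" and uE: "u \<otimes> E = u"
  shows "u \<otimes> a0 \<otimes> (b1 \<otimes> F \<oplus> (\<one> \<ominus> F)) = \<zero>"
proof -
  have "u \<otimes> (E \<otimes> a0) = u \<otimes> a0" using uE u by (simp add: m_assoc[symmetric])
  thus ?thesis using u by (simp add: ring_simprules RR DD)
qed

lemma I4: "v \<in> carrier R \<Longrightarrow> E \<otimes> v = v \<Longrightarrow> (F \<otimes> a1 \<oplus> (\<one> \<ominus> F)) \<otimes> (b0 \<otimes> v) = \<zero>"
  by (simp add: ring_simprules RR DD)

end

lemma family: "\<exists>s t. (\<forall>i. s i \<in> carrier R \<and> t i \<in> carrier R) \<and>
   (\<forall>i<Suc m. \<forall>j<Suc m. t i \<otimes> s j = (if i = j then \<one> else \<zero>)) \<and> (\<Oplus>i\<in>{..<Suc m}. s i \<otimes> t i) = \<one>"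
proof (induction m)
  case 0
  show ?case by (rule exI[of _ "\<lambda>_. \<one>"], rule exI[of _ "\<lambda>_. \<one>"]) (auto simp: lessThan_Suc)
next
  case (Suc m)
  then obtain s t where st: "\<forall>i. s i \<in> carrier R \<and> t i \<in> carrier R"
    "\<forall>i<Suc m. \<forall>j<Suc m. t i \<otimes> s j = (if i = j then \<one> else \<zero>)" "(\<Oplus>i\<in>{..<Suc m}. s i \<otimes> t i) = \<one>"
    by blast
  have sc[simp]: "s i \<in> carrier R" "t i \<in> carrier R" for i using st(1) by auto
  define s' where "s' i = (case i of 0 \<Rightarrow> b0 | Suc k \<Rightarrow> b1 \<otimes> s k)" for i
  define t' where "t' i = (case i of 0 \<Rightarrow> a0 | Suc k \<Rightarrow> t k \<otimes> a1)" for i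
  have c': "s' i \<in> carrier R" "t' i \<in> carrier R" for i unfolding s'_def t'_def by (auto split: nat.splits)
  have orth: "t' i \<otimes> s' j = (if i = j then \<one> else \<zero>)" if "i < Suc (Suc m)" "j < Suc (Suc m)" for i j
  proof (cases i; cases j)
    fix i' j' assume i: "i = Suc i'" and j: "j = Suc j'"
    have "t' i \<otimes> s' j = t i' \<otimes> (a1 \<otimes> (b1 \<otimes> s j'))" unfolding i j s'_def t'_def by (simp add: m_assoc)
    also have "\<dots> = t i' \<otimes> s j'" by (simp add: RR)
    finally show ?thesis using st(2) that i j by auto
  qed (auto simp: s'_def t'_def m_assoc RR)
  have "(\<Oplus>i\<in>{..<Suc (Suc m)}. s' i \<otimes> t' i) = (\<Oplus>i\<in>{..Suc m}. s' i \<otimes> t' i)"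
    by (simp add: lessThan_Suc_atMost)
  also have "\<dots> = (\<Oplus>i\<in>{..m}. s' (Suc i) \<otimes> t' (Suc i)) \<oplus> s' 0 \<otimes> t' 0"
    by (rule finsum_Suc2) (use c' in auto)
  also have "(\<Oplus>i\<in>{..m}. s' (Suc i) \<otimes> t' (Suc i)) = (\<Oplus>i\<in>{..<Suc m}. b1 \<otimes> (s i \<otimes> t i) \<otimes> a1)"
    unfolding lessThan_Suc_atMost[symmetric] by (rule finsum_cong') (auto simp: s'_def t'_def m_assoc)
  also have "\<dots> = b1 \<otimes> (\<Oplus>i\<in>{..<Suc m}. s i \<otimes> t i) \<otimes> a1"
    by (simp add: finsum_ldistr finsum_rdistr)
  also have "\<dots> = b1 \<otimes> a1" using st(3) by simp
  finally have "(\<Oplus>i\<in>{..<Suc (Suc m)}. s' i \<otimes> t' i) = \<one>"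
    using e3 by (simp add: s'_def t'_def a_comm)
  thus ?case using c' orth by blast
qed

end

lemma finsum_swap:
  assumes "finite A" "finite B" "\<And>i j. i \<in> A \<Longrightarrow> j \<in> B \<Longrightarrow> f i j \<in> carrier R"
  shows "(\<Oplus>i\<in>A. \<Oplus>j\<in>B. f i j) = (\<Oplus>j\<in>B. \<Oplus>i\<in>A. f i j)"
  using assms
proof (induction A rule: finite_induct)
  case empty thus ?case by (simp add: finsum_zero)
next
  case (insert a F)
  have "(\<Oplus>i\<in>insert a F. \<Oplus>j\<in>B. f i j) = (\<Oplus>j\<in>B. f a j) \<oplus> (\<Oplus>i\<in>F. \<Oplus>j\<in>B. f i j)"
    using insert by (intro finsum_insert) (auto intro: finsum_closed)
  also have "\<dots> = (\<Oplus>j\<in>B. f a j) \<oplus> (\<Oplus>j\<in>B. \<Oplus>i\<in>F. f i j)" using insert by simp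
  also have "\<dots> = (\<Oplus>j\<in>B. f a j \<oplus> (\<Oplus>i\<in>F. f i j))"
    using insert by (intro finsum_addf[symmetric]) (auto intro: finsum_closed)
  also have "\<dots> = (\<Oplus>j\<in>B. \<Oplus>i\<in>insert a F. f i j)"
    using insert by (intro finsum_cong') (auto intro: finsum_closed)
  finally show ?case .
qed

end

context ring begin

context fixes n :: nat and s t :: "nat \<Rightarrow> 'a"
  assumes st[simp]: "\<And>i. s i \<in> carrier R" "\<And>i. t i \<in> carrier R"
    and orth: "\<And>i j. i < n \<Longrightarrow> j < n \<Longrightarrow> t i \<otimes> s j = (if i = j then \<one> else \<zero>)"
begin

lemma Klem:
  assumes f: "\<And>k. k < n \<Longrightarrow> f k \<in> carrier R" and g: "\<And>k. k < n \<Longrightarrow> g k \<in> carrier R"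
  shows "(\<Oplus>k\<in>{..<n}. f k \<otimes> t k) \<otimes> (\<Oplus>l\<in>{..<n}. s l \<otimes> g l) = (\<Oplus>k\<in>{..<n}. f k \<otimes> g k)"
proof -
  have G: "(\<Oplus>l\<in>{..<n}. s l \<otimes> g l) \<in> carrier R" by (rule finsum_closed) (use g in auto)
  have "(\<Oplus>k\<in>{..<n}. f k \<otimes> t k) \<otimes> (\<Oplus>l\<in>{..<n}. s l \<otimes> g l) = (\<Oplus>k\<in>{..<n}. (f k \<otimes> t k) \<otimes> (\<Oplus>l\<in>{..<n}. s l \<otimes> g l))"
    by (rule finsum_ldistr) (use f G in auto)
  also have "\<dots> = (\<Oplus>k\<in>{..<n}. (\<Oplus>l\<in>{..<n}. (f k \<otimes> t k) \<otimes> (s l \<otimes> g l)))"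
    by (rule finsum_cong') (use f g in \<open>auto intro!: finsum_rdistr finsum_closed\<close>)
  also have "\<dots> = (\<Oplus>k\<in>{..<n}. f k \<otimes> g k)"
  proof (rule finsum_cong')
    fix k assume k: "k \<in> {..<n}"
    have "(\<Oplus>l\<in>{..<n}. (f k \<otimes> t k) \<otimes> (s l \<otimes> g l)) = (\<Oplus>l\<in>{..<n}. if k = l then f k \<otimes> g l else \<zero>)"
    proof (rule finsum_cong')
      fix l assume l: "l \<in> {..<n}"
      have "(f k \<otimes> t k) \<otimes> (s l \<otimes> g l) = f k \<otimes> ((t k \<otimes> s l) \<otimes> g l)"
        using f g k l by (simp add: m_assoc)
      thus "(f k \<otimes> t k) \<otimes> (s l \<otimes> g l) = (if k = l then f k \<otimes> g l else \<zero>)"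
        using orth[of k l] f g k l by auto
    qed (use f g k in auto)
    also have "\<dots> = f k \<otimes> g k"
      by (rule finsum_singleton) (use f g k in auto)
    finally show "(\<Oplus>l\<in>{..<n}. (f k \<otimes> t k) \<otimes> (s l \<otimes> g l)) = f k \<otimes> g k" .
  qed (use f g in auto)
  finally show ?thesis .
qed

context fixes e :: "nat \<Rightarrow> nat \<Rightarrow> 'a"
  assumes idem: "idempotent_mat R n e"
begin

lemma ec[simp]: "i < n \<Longrightarrow> j < n \<Longrightarrow> e i j \<in> carrier R"
  using idem unfolding idempotent_mat_def mat_carrier_def by auto

lemma ee: "i < n \<Longrightarrow> j < n \<Longrightarrow> (\<Oplus>k\<in>{..<n}. e i k \<otimes> e k j) = e i j"
  using idem unfolding idempotent_mat_def mat_eq_def mat_mult_def by auto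

definition "uu i = (\<Oplus>m\<in>{..<n}. e i m \<otimes> t m)"
definition "vv j = (\<Oplus>l\<in>{..<n}. s l \<otimes> e l j)"
definition "EE = (\<Oplus>l\<in>{..<n}. s l \<otimes> uu l)"

lemma uu_c[simp]: "i < n \<Longrightarrow> uu i \<in> carrier R" unfolding uu_def by (rule finsum_closed) auto
lemma vv_c[simp]: "j < n \<Longrightarrow> vv j \<in> carrier R" unfolding vv_def by (rule finsum_closed) auto
lemma EE_c[simp]: "EE \<in> carrier R" unfolding EE_def by (rule finsum_closed) auto

lemma C: "i < n \<Longrightarrow> j < n \<Longrightarrow> uu i \<otimes> vv j = e i j"
  unfolding uu_def vv_def by (subst Klem) (auto simp: ee)

lemma A0: assumes i: "i < n" shows "(\<Oplus>k\<in>{..<n}. e i k \<otimes> uu k) = uu i"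
proof -
  have "(\<Oplus>k\<in>{..<n}. e i k \<otimes> uu k) = (\<Oplus>k\<in>{..<n}. \<Oplus>m\<in>{..<n}. e i k \<otimes> (e k m \<otimes> t m))"
    unfolding uu_def by (rule finsum_cong') (use i in \<open>auto intro!: finsum_rdistr finsum_closed\<close>)
  also have "\<dots> = (\<Oplus>m\<in>{..<n}. \<Oplus>k\<in>{..<n}. e i k \<otimes> (e k m \<otimes> t m))"
    by (rule finsum_swap) (use i in auto)
  also have "\<dots> = (\<Oplus>m\<in>{..<n}. (\<Oplus>k\<in>{..<n}. e i k \<otimes> e k m) \<otimes> t m)"
  proof (rule finsum_cong')
    fix m assume m: "m \<in> {..<n}"
    have "(\<Oplus>k\<in>{..<n}. e i k \<otimes> e k m) \<otimes> t m = (\<Oplus>k\<in>{..<n}. e i k \<otimes> e k m \<otimes> t m)"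
      by (rule finsum_ldistr) (use i m in auto)
    also have "\<dots> = (\<Oplus>k\<in>{..<n}. e i k \<otimes> (e k m \<otimes> t m))"
      by (rule finsum_cong') (use i m in \<open>auto simp: m_assoc\<close>)
    finally show "(\<Oplus>k\<in>{..<n}. e i k \<otimes> (e k m \<otimes> t m)) = (\<Oplus>k\<in>{..<n}. e i k \<otimes> e k m) \<otimes> t m"
      by (rule sym)
  qed (use i in \<open>auto intro!: finsum_closed\<close>)
  also have "\<dots> = uu i" unfolding uu_def by (rule finsum_cong') (use i in \<open>auto simp: ee\<close>)
  finally show ?thesis .
qed

lemma A: "i < n \<Longrightarrow> uu i \<otimes> EE = uu i"
proof -
  assume i: "i < n"
  have "uu i \<otimes> EE = (\<Oplus>k\<in>{..<n}. e i k \<otimes> uu k)"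
    unfolding EE_def by (subst (1) uu_def, subst Klem) (use i in auto)
  thus ?thesis using A0[OF i] by simp
qed

lemma B: assumes j: "j < n" shows "EE \<otimes> vv j = vv j"
proof -
  have "EE \<otimes> vv j = (\<Oplus>l\<in>{..<n}. s l \<otimes> uu l \<otimes> vv j)"
    unfolding EE_def by (rule finsum_ldistr) (use j in auto)
  also have "\<dots> = (\<Oplus>l\<in>{..<n}. s l \<otimes> e l j)"
    by (rule finsum_cong') (use j in \<open>auto simp: m_assoc C\<close>)
  finally show ?thesis unfolding vv_def .
qed

lemma EEidem: "EE \<otimes> EE = EE"
proof -
  have "EE \<otimes> EE = (\<Oplus>l\<in>{..<n}. s l \<otimes> uu l \<otimes> EE)"
    by (subst (1) EE_def, rule finsum_ldistr) auto
  also have "\<dots> = (\<Oplus>l\<in>{..<n}. s l \<otimes> uu l)"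
    by (rule finsum_cong') (auto simp: m_assoc A)
  finally show ?thesis unfolding EE_def[symmetric] .
qed

lemma D: "(\<Oplus>j\<in>{..<n}. vv j \<otimes> uu j) = EE"
proof -
  have "(\<Oplus>j\<in>{..<n}. vv j \<otimes> uu j) = (\<Oplus>j\<in>{..<n}. \<Oplus>l\<in>{..<n}. s l \<otimes> (e l j \<otimes> uu j))"
    unfolding vv_def
  proof (rule finsum_cong')
    fix j assume j: "j \<in> {..<n}"
    have "(\<Oplus>l\<in>{..<n}. s l \<otimes> e l j) \<otimes> uu j = (\<Oplus>l\<in>{..<n}. s l \<otimes> e l j \<otimes> uu j)"
      by (rule finsum_ldistr) (use j in auto)
    also have "\<dots> = (\<Oplus>l\<in>{..<n}. s l \<otimes> (e l j \<otimes> uu j))"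
      by (rule finsum_cong') (use j in \<open>auto simp: m_assoc\<close>)
    finally show "(\<Oplus>l\<in>{..<n}. s l \<otimes> e l j) \<otimes> uu j = (\<Oplus>l\<in>{..<n}. s l \<otimes> (e l j \<otimes> uu j))" .
  qed (auto intro!: finsum_closed)
  also have "\<dots> = (\<Oplus>l\<in>{..<n}. \<Oplus>j\<in>{..<n}. s l \<otimes> (e l j \<otimes> uu j))"
    by (rule finsum_swap) auto
  also have "\<dots> = (\<Oplus>l\<in>{..<n}. s l \<otimes> (\<Oplus>j\<in>{..<n}. e l j \<otimes> uu j))"
    by (rule finsum_cong') (auto simp: finsum_rdistr intro!: finsum_closed)
  also have "\<dots> = EE" unfolding EE_def by (rule finsum_cong') (auto simp: A0)
  finally show ?thesis .
qed

end
end
end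

context ring begin

lemma finsum_one_idx: "f 0 \<in> carrier R \<Longrightarrow> finsum R f {..<Suc 0} = f 0"
  by (simp add: lessThan_Suc)

lemma K0_main:
  assumes ca: "a0 \<in> carrier R" "b0 \<in> carrier R" "a1 \<in> carrier R" "b1 \<in> carrier R"
    and e1: "a0 \<otimes> b0 = \<one>" and e2: "a1 \<otimes> b1 = \<one>" and e3: "b0 \<otimes> a0 \<oplus> b1 \<otimes> a1 = \<one>"
    and phi: "\<phi> \<in> ring_hom R R"
    and bx: "\<And>a. a \<in> carrier R \<Longrightarrow> boxplus R a0 b0 a1 b1 a (\<phi> a) = \<phi> a"
  shows "K0_trivial R"
  unfolding K0_trivial_def
proof (intro allI impI)
  fix n e assume idem: "idempotent_mat R n e"
  show "\<exists>k. mvn_equiv R (n + k) k (dsum_one R n e) (identity_mat R)"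
  proof (cases n)
    case 0
    show ?thesis unfolding 0 mvn_equiv_def mat_carrier_def mat_eq_def by (rule exI[of _ 0]) auto
  next
    case (Suc m)
    obtain s t where st: "\<forall>i. s i \<in> carrier R \<and> t i \<in> carrier R"
      "\<forall>i<Suc m. \<forall>j<Suc m. t i \<otimes> s j = (if i = j then \<one> else \<zero>)" "(\<Oplus>i\<in>{..<Suc m}. s i \<otimes> t i) = \<one>"
      using family[OF ca e1 e2 e3, of m] by blast
    have sc: "\<And>i. s i \<in> carrier R" "\<And>i. t i \<in> carrier R" using st(1) by auto
    have orth: "\<And>i j. i < n \<Longrightarrow> j < n \<Longrightarrow> t i \<otimes> s j = (if i = j then \<one> else \<zero>)" using st(2) Suc by auto
    note ctx = sc orth idem
    define E where "E = EE n s t e"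
    define F where "F = \<phi> E"
    have Ec: "E \<in> carrier R" unfolding E_def by (rule EE_c[OF ctx])
    have Fc: "F \<in> carrier R" unfolding F_def by (rule ring_hom_closed[OF phi Ec])
    have FF: "F \<otimes> F = F" unfolding F_def
      using ring_hom_mult[OF phi Ec Ec, symmetric] EEidem[OF ctx] unfolding E_def by simp
    have box: "b0 \<otimes> E \<otimes> a0 \<oplus> b1 \<otimes> F \<otimes> a1 = F"
      using bx[OF Ec] unfolding boxplus_def F_def .
    note ctx2 = ca e1 e2 e3 Ec Fc FF box
    have AE: "\<And>i. i < n \<Longrightarrow> uu n t e i \<otimes> E = uu n t e i" using A[OF ctx] unfolding E_def by blast
    have BE: "\<And>j. j < n \<Longrightarrow> E \<otimes> vv n s e j = vv n s e j" using B[OF ctx] unfolding E_def by blast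
    have uuc: "\<And>i. i < n \<Longrightarrow> uu n t e i \<in> carrier R" using uu_c[OF ctx] by blast
    have vvc: "\<And>i. i < n \<Longrightarrow> vv n s e i \<in> carrier R" using vv_c[OF ctx] by blast
    define c1 where "c1 = F \<otimes> a1 \<oplus> (\<one> \<ominus> F)"
    define d1 where "d1 = b1 \<otimes> F \<oplus> (\<one> \<ominus> F)"
    have c1c: "c1 \<in> carrier R" and d1c: "d1 \<in> carrier R" unfolding c1_def d1_def using ca Fc by auto
    define x where "x = (\<lambda>i j::nat. if i < n then uu n t e i \<otimes> a0 else c1)"
    define y where "y = (\<lambda>i::nat. \<lambda>j. if j < n then b0 \<otimes> vv n s e j else d1)"
    have xc: "\<And>i j. i < n + 1 \<Longrightarrow> x i j \<in> carrier R" unfolding x_def using uu_c[OF ctx] ca c1c by auto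
    have yc: "\<And>i j. j < n + 1 \<Longrightarrow> y i j \<in> carrier R" unfolding y_def using vv_c[OF ctx] ca d1c by auto
    show ?thesis
    proof (rule exI[of _ 1], unfold mvn_equiv_def, rule exI[of _ x], rule exI[of _ y], intro conjI)
      show "x \<in> mat_carrier R (n + 1) 1" unfolding mat_carrier_def using xc by auto
      show "y \<in> mat_carrier R 1 (n + 1)" unfolding mat_carrier_def using yc by auto
      show "mat_eq (n + 1) (n + 1) (mat_mult R 1 x y) (dsum_one R n e)"
        unfolding mat_eq_def
      proof (intro allI impI)
        fix i j assume i: "i < n + 1" and j: "j < n + 1"
        have "mat_mult R 1 x y i j = x i 0 \<otimes> y 0 j"
          unfolding mat_mult_def using finsum_one_idx[of "\<lambda>l. x i l \<otimes> y l j"] xc[OF i] yc[OF j] by simp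
        also have "\<dots> = dsum_one R n e i j"
        proof (cases "i < n"; cases "j < n")
          assume a: "i < n" "j < n"
          have "x i 0 \<otimes> y 0 j = uu n t e i \<otimes> (a0 \<otimes> (b0 \<otimes> vv n s e j))"
            unfolding x_def y_def using a uu_c[OF ctx] vv_c[OF ctx] ca by (simp add: m_assoc)
          also have "\<dots> = uu n t e i \<otimes> vv n s e j"
            using a vv_c[OF ctx] ca by (simp add: m_assoc[symmetric] e1)
          also have "\<dots> = e i j" by (rule C[OF ctx a])
          finally show ?thesis unfolding dsum_one_def using a by simp
        next
          assume a: "i < n" "\<not> j < n"
          have "x i 0 \<otimes> y 0 j = uu n t e i \<otimes> a0 \<otimes> (b1 \<otimes> F \<oplus> (\<one> \<ominus> F))"
            unfolding x_def y_def d1_def using a by simp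
          also have "\<dots> = \<zero>"
            by (rule I3[OF ctx2 uuc[OF a(1)] AE[OF a(1)]])
          finally show ?thesis unfolding dsum_one_def using a by simp
        next
          assume a: "\<not> i < n" "j < n"
          have "x i 0 \<otimes> y 0 j = (F \<otimes> a1 \<oplus> (\<one> \<ominus> F)) \<otimes> (b0 \<otimes> vv n s e j)"
            unfolding x_def y_def c1_def using a by simp
          also have "\<dots> = \<zero>"
            by (rule I4[OF ctx2 vvc[OF a(2)] BE[OF a(2)]])
          finally show ?thesis unfolding dsum_one_def using a by simp
        next
          assume a: "\<not> i < n" "\<not> j < n"
          hence ij: "i = n" "j = n" using i j by auto
          have "x i 0 \<otimes> y 0 j = (F \<otimes> a1 \<oplus> (\<one> \<ominus> F)) \<otimes> (b1 \<otimes> F \<oplus> (\<one> \<ominus> F))"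
            unfolding x_def y_def c1_def d1_def using a by simp
          also have "\<dots> = \<one>" by (rule I1[OF ctx2])
          finally show ?thesis unfolding dsum_one_def using ij by simp
        qed
        finally show "mat_mult R 1 x y i j = dsum_one R n e i j" .
      qed
      show "mat_eq 1 1 (mat_mult R (n + 1) y x) (identity_mat R)"
        unfolding mat_eq_def
      proof (intro allI impI)
        fix i j :: nat assume "i < 1" "j < 1"
        hence ij: "i = 0" "j = 0" by auto
        have fc: "(\<lambda>l. y 0 l \<otimes> x l 0) \<in> {..<n} \<rightarrow> carrier R" using xc yc by auto
        have "mat_mult R (n + 1) y x 0 0 = y 0 n \<otimes> x n 0 \<oplus> (\<Oplus>l\<in>{..<n}. y 0 l \<otimes> x l 0)"
          unfolding mat_mult_def using fc xc yc by (simp add: lessThan_Suc finsum_insert)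
        also have "(\<Oplus>l\<in>{..<n}. y 0 l \<otimes> x l 0) = (\<Oplus>l\<in>{..<n}. b0 \<otimes> (vv n s e l \<otimes> uu n t e l) \<otimes> a0)"
          by (rule finsum_cong') (use uu_c[OF ctx] vv_c[OF ctx] ca in \<open>auto simp: x_def y_def m_assoc\<close>)
        also have "\<dots> = b0 \<otimes> (\<Oplus>l\<in>{..<n}. vv n s e l \<otimes> uu n t e l) \<otimes> a0"
          using uu_c[OF ctx] vv_c[OF ctx] ca by (simp add: finsum_ldistr finsum_rdistr)
        also have "\<dots> = b0 \<otimes> E \<otimes> a0" using D[OF ctx] unfolding E_def by simp
        also have "y 0 n \<otimes> x n 0 = d1 \<otimes> c1" unfolding x_def y_def by simp
        also have "d1 \<otimes> c1 \<oplus> b0 \<otimes> E \<otimes> a0 = \<one>" unfolding c1_def d1_def by (rule I2[OF ctx2])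
        finally show "mat_mult R (n + 1) y x i j = identity_mat R i j" unfolding identity_mat_def ij by simp
      qed
    qed
  qed
qed

end

lemma K0_of_infsum: "infinite_sum_ring R \<Longrightarrow> K0_trivial R"
proof -
  assume "infinite_sum_ring R"
  then obtain a0 b0 a1 b1 \<phi> where r: "ring R" and d: "sum_ring_data R a0 b0 a1 b1" and h: "\<phi> \<in> ring_hom R R"
    and bx: "\<forall>a\<in>carrier R. boxplus R a0 b0 a1 b1 a (\<phi> a) = \<phi> a"
    unfolding infinite_sum_ring_def by blast
  show ?thesis
    by (rule ring.K0_main[OF r, of a0 b0 a1 b1 \<phi>]) (use d h bx in \<open>auto simp: sum_ring_data_def\<close>)
qed

theorem lemma3p11:
  fixes p :: nat
  assumes "prime p"
    and "countable (UNIV :: 'x set)"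
    and "infinite (UNIV :: 'x set)"
  shows "infinite_sum_ring (Bop1_ring p :: (('x \<Rightarrow> qp) \<Rightarrow> ('x \<Rightarrow> qp)) ring)
         \<and> K0_trivial (Bop1_ring p :: (('x \<Rightarrow> qp) \<Rightarrow> ('x \<Rightarrow> qp)) ring)"
proof -
  have h: "infinite_sum_ring (Bop1_ring p :: (('x \<Rightarrow> qp) \<Rightarrow> ('x \<Rightarrow> qp)) ring)"
    by (rule infsum_main[OF assms])
  show ?thesis using h K0_of_infsum[OF h] by simp
qed

end
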